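(* Let $(\Omega,\mathcal{F},\mathbb{P})$ be a probability space, $\rho$ a random variable with $\rho>0$ a.s. and $\mathbb{E}[\rho]<\infty$, $\delta:=\mathbb{E}[\rho]$, $A$ a random variable, and $C$ a bivariate copula. Assume the conditional distribution of $\rho$ given $A$ is continuous and the distribution of $A$ is continuous. Let $\alpha\in(0,1)$, $x>0$, and $V(X):=F_X^{-1}(\alpha)$ (the $\alpha$-quantile given by the right-continuous quantile function; equivalently $m$ is the point mass at $\alpha$). Define $Z:=C_{1|2}^{-1}\big(1-F_{\rho|A}(\rho,A),F_A(A)\big)$, $\varphi(z):=\mathbb{E}[\rho\mid Z=z]$ for $z\in(0,1)$, $\tilde\zeta(c):=m([c,1])/\int_c^1\varphi(z)\,dz=\mathbf{1}_{\{c\le\alpha\}}/\int_c^1\varphi(z)\,dz$ for $c\in(0,1)$, and $\tilde\gamma^*:=\sup_{c\in(0,1)}\tilde\zeta(c)$. Then $\tilde\gamma^*=\tilde\zeta(\alpha)>1/\delta$, and $X^*:=k^*\mathbf{1}_{\{Z\ge\alpha\}}$ with $k^*:=x/\mathbb{E}[\rho\mathbf{1}_{\{Z\ge\alpha\}}]$ is optimal for the problem of maximizing $V(X)$ subject to $\mathbb{E}[\rho X]\le x$, $X\ge0$, and $\mathbb{P}(X\le y,A\le a)=C(F_X(y),F_A(a))$ for all $y,a\in\mathbb{R}$.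
   Context: For random variables $Y_1,Y_2$, $F_{Y_1|Y_2}(\cdot,y_2)$ is the conditional CDF of $Y_1$ given $Y_2=y_2$; $F_A$ is the CDF of $A$. $C_{1|2}^{-1}(\cdot,v)$ is the right-continuous conditional quantile function of the first component of a random vector with distribution $C$ given that the second component equals $v$. $F_X^{-1}$ is the right-continuous quantile function of $X$. *)

theory Defs
  imports "HOL-Probability.Probability"
begin

definition cdf_rv :: "'a measure \<Rightarrow> ('a \<Rightarrow> real) \<Rightarrow> real \<Rightarrow> real" where
  "cdf_rv M X y = measure M {w \<in> space M. X w \<le> y}"

definition rquantile :: "(real \<Rightarrow> real) \<Rightarrow> real \<Rightarrow> real" where
  "rquantile F t = Inf {y. F y > t}"

definition copula :: "(real \<Rightarrow> real \<Rightarrow> real) \<Rightarrow> bool" where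
  "copula C \<longleftrightarrow>
     (\<forall>u\<in>{0..1}. C u 0 = 0 \<and> C 0 u = 0 \<and> C u 1 = u \<and> C 1 u = u) \<and>
     (\<forall>u1\<in>{0..1}. \<forall>u2\<in>{0..1}. \<forall>v1\<in>{0..1}. \<forall>v2\<in>{0..1}.
        u1 \<le> u2 \<longrightarrow> v1 \<le> v2 \<longrightarrow> C u2 v2 - C u2 v1 - C u1 v2 + C u1 v1 \<ge> 0)"

text \<open>F is a (regular) conditional CDF of Y given X under M:
  F y x = P(Y \<le> y | X = x).\<close>
definition is_cond_cdf ::
  "'a measure \<Rightarrow> ('a \<Rightarrow> real) \<Rightarrow> ('a \<Rightarrow> real) \<Rightarrow> (real \<Rightarrow> real \<Rightarrow> real) \<Rightarrow> bool" where
  "is_cond_cdf M Y X F \<longleftrightarrow>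
     (\<forall>x. mono (\<lambda>y. F y x)) \<and>
     (\<forall>x y. continuous (at_right y) (\<lambda>y. F y x)) \<and>
     (\<forall>x. ((\<lambda>y. F y x) \<longlongrightarrow> 0) at_bot) \<and>
     (\<forall>x. ((\<lambda>y. F y x) \<longlongrightarrow> 1) at_top) \<and>
     (\<forall>y. (\<lambda>x. F y x) \<in> borel_measurable borel) \<and>
     (\<forall>y a. measure M {w \<in> space M. Y w \<le> y \<and> X w \<le> a}
              = (\<integral>w. indicator {..a} (X w) * F y (X w) \<partial>M))"

text \<open>C12 u v is a (regular) conditional CDF of the first component given
  that the second component equals v, for a random vector (U,V) with distribution
  function C (V is uniform on [0,1] since C is a copula).\<close>
definition is_copula_cond_cdf ::
  "(real \<Rightarrow> real \<Rightarrow> real) \<Rightarrow> (real \<Rightarrow> real \<Rightarrow> real) \<Rightarrow> bool" where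
  "is_copula_cond_cdf C C12 \<longleftrightarrow>
     (\<forall>v\<in>{0..1}. mono (\<lambda>u. C12 u v)) \<and>
     (\<forall>v\<in>{0..1}. \<forall>u. continuous (at_right u) (\<lambda>u. C12 u v)) \<and>
     (\<forall>v\<in>{0..1}. \<forall>u. u < 0 \<longrightarrow> C12 u v = 0) \<and>
     (\<forall>v\<in>{0..1}. \<forall>u. 1 \<le> u \<longrightarrow> C12 u v = 1) \<and>
     (\<forall>u. (\<lambda>v. C12 u v) \<in> borel_measurable borel) \<and>
     (\<forall>u\<in>{0..1}. \<forall>v\<in>{0..1}. C u v = (LBINT t:{0..v}. C12 u t))"

definition cond_quantile :: "(real \<Rightarrow> real \<Rightarrow> real) \<Rightarrow> real \<Rightarrow> real \<Rightarrow> real" where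
  "cond_quantile C12 t v = rquantile (\<lambda>u. C12 u v) t"

definition feasible ::
  "'a measure \<Rightarrow> ('a \<Rightarrow> real) \<Rightarrow> ('a \<Rightarrow> real) \<Rightarrow> (real \<Rightarrow> real \<Rightarrow> real) \<Rightarrow> real
     \<Rightarrow> ('a \<Rightarrow> real) \<Rightarrow> bool" where
  "feasible M \<rho> A C x X \<longleftrightarrow>
     X \<in> borel_measurable M \<and>
     (AE w in M. 0 \<le> X w) \<and>
     (\<integral>\<^sup>+ w. ennreal (\<rho> w * X w) \<partial>M) \<le> ennreal x \<and>
     (\<forall>y a. measure M {w \<in> space M. X w \<le> y \<and> A w \<le> a}
              = C (cdf_rv M X y) (cdf_rv M A a))"

end

theory Submission
  imports Defs
begin

lemma cdf_rv_eq_cdf: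
  assumes "X \<in> borel_measurable M"
  shows "cdf_rv M X = cdf (distr M borel X)"
  unfolding cdf_rv_def cdf_def using assms
  by (auto simp: measure_distr intro!: ext arg_cong[where f="measure M"])

lemma (in prob_space) cdf_rv_props:
  assumes "X \<in> borel_measurable M"
  shows "mono (cdf_rv M X)" "\<And>y. 0 \<le> cdf_rv M X y" "\<And>y. cdf_rv M X y \<le> 1"
    "(cdf_rv M X \<longlongrightarrow> 0) at_bot" "(cdf_rv M X \<longlongrightarrow> 1) at_top"
proof -
  interpret D: real_distribution "distr M borel X"
    using assms by simp
  show "mono (cdf_rv M X)" unfolding cdf_rv_eq_cdf[OF assms]
    by (intro monoI D.cdf_nondecreasing)
  show "\<And>y. 0 \<le> cdf_rv M X y" unfolding cdf_rv_eq_cdf[OF assms] by (rule D.cdf_nonneg)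
  show "\<And>y. cdf_rv M X y \<le> 1" unfolding cdf_rv_eq_cdf[OF assms] by (rule D.cdf_bounded_prob)
  show "(cdf_rv M X \<longlongrightarrow> 0) at_bot" unfolding cdf_rv_eq_cdf[OF assms] by (rule D.cdf_lim_at_bot)
  show "(cdf_rv M X \<longlongrightarrow> 1) at_top" unfolding cdf_rv_eq_cdf[OF assms] by (rule D.cdf_lim_at_top_prob)
qed

lemma mono_ge_lim_bot:
  fixes F :: "real \<Rightarrow> real"
  assumes "mono F" "(F \<longlongrightarrow> l) at_bot"
  shows "l \<le> F y"
proof (rule tendsto_le[OF _ tendsto_const assms(2)])
  show "\<forall>\<^sub>F x in at_bot. F x \<le> F y"
    using assms(1) by (auto simp: eventually_at_bot_linorder mono_def intro!: exI[of _ y])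
qed simp

lemma mono_le_lim_top:
  fixes F :: "real \<Rightarrow> real"
  assumes "mono F" "(F \<longlongrightarrow> l) at_top"
  shows "F y \<le> l"
proof (rule tendsto_le[OF _ assms(2) tendsto_const])
  show "\<forall>\<^sub>F x in at_top. F y \<le> F x"
    using assms(1) by (auto simp: eventually_at_top_linorder mono_def intro!: exI[of _ y])
qed simp

lemma cont_cdf_level:
  fixes F :: "real \<Rightarrow> real"
  assumes cont: "continuous_on UNIV F" and mono: "mono F"
    and bot: "(F \<longlongrightarrow> 0) at_bot" and top: "(F \<longlongrightarrow> 1) at_top"
    and t: "0 < t" "t < 1"
  shows "F (Sup {r. F r \<le> t}) = t" "\<And>r. F r \<le> t \<longleftrightarrow> r \<le> Sup {r. F r \<le> t}"
proof -
  define S where "S = {r. F r \<le> t}"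
  have "\<forall>\<^sub>F r in at_bot. F r < t" using order_tendstoD(2)[OF bot t(1)] .
  then obtain r0 where r0: "\<And>r. r \<le> r0 \<Longrightarrow> F r < t" by (auto simp: eventually_at_bot_linorder)
  have "\<forall>\<^sub>F r in at_top. t < F r" using order_tendstoD(1)[OF top t(2)] .
  then obtain r1 where r1: "\<And>r. r1 \<le> r \<Longrightarrow> t < F r" by (auto simp: eventually_at_top_linorder)
  have "r0 \<in> S" using r0[of r0] by (simp add: S_def)
  then have ne: "S \<noteq> {}" by auto
  have bdd: "bdd_above S"
    unfolding bdd_above_def S_def using r1 by (auto intro!: exI[of _ r1]) (meson linorder_not_le order_less_le_trans r1 order.strict_implies_order)
  have cl: "closed S" unfolding S_def
    by (intro closed_Collect_le cont continuous_on_const)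
  have QS: "Sup S \<in> S" by (rule closed_contains_Sup[OF ne bdd cl])
  have iff: "F r \<le> t \<longleftrightarrow> r \<le> Sup S" for r
  proof
    assume "F r \<le> t" then show "r \<le> Sup S" using bdd by (auto intro: cSup_upper simp: S_def)
  next
    assume "r \<le> Sup S" then show "F r \<le> t" using QS mono by (auto simp: S_def mono_def intro: order_trans)
  qed
  have "r0 \<le> max r0 r1" by simp
  have "\<exists>x\<ge>r0. x \<le> max r0 r1 \<and> F x = t"
    by (rule IVT') (use r0[of r0] r1[of "max r0 r1"] in \<open>auto intro: continuous_on_subset[OF cont]\<close>)
  then obtain x where "F x = t" by auto
  then have "x \<le> Sup S" using iff by auto
  then have "t \<le> F (Sup S)" using mono \<open>F x = t\<close> by (auto simp: mono_def)
  moreover have "F (Sup S) \<le> t" using QS by (simp add: S_def)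
  ultimately have "F (Sup S) = t" by linarith
  then show "F (Sup {r. F r \<le> t}) = t" unfolding S_def .
  show "\<And>r. F r \<le> t \<longleftrightarrow> r \<le> Sup {r. F r \<le> t}" using iff unfolding S_def by blast
qed

lemma (in prob_space) cdf_self_le:
  assumes Y: "Y \<in> borel_measurable M" and cont: "continuous_on UNIV (cdf_rv M Y)"
    and t: "0 \<le> t" "t \<le> 1"
  shows "measure M {w \<in> space M. cdf_rv M Y (Y w) \<le> t} = t"
proof -
  let ?F = "cdf_rv M Y"
  note P = cdf_rv_props[OF Y]
  have Fm[measurable]: "?F \<in> borel_measurable borel" by (rule borel_measurable_mono[OF P(1)])
  note Y[measurable]
  have main: "measure M {w \<in> space M. ?F (Y w) \<le> s} = s" if s: "0 < s" "s < 1" for s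
  proof -
    note L = cont_cdf_level[OF cont P(1) P(4) P(5) s]
    have "{w \<in> space M. ?F (Y w) \<le> s} = {w \<in> space M. Y w \<le> Sup {r. ?F r \<le> s}}"
      using L(2) by blast
    then show ?thesis using L(1) by (simp add: cdf_rv_def)
  qed
  show ?thesis
  proof (cases "t = 0")
    case True
    have "measure M {w \<in> space M. ?F (Y w) \<le> 0} \<le> 0"
    proof (rule field_le_epsilon)
      fix e :: real assume e: "0 < e"
      have "measure M {w \<in> space M. ?F (Y w) \<le> 0} \<le> measure M {w \<in> space M. ?F (Y w) \<le> min e (1/2)}"
      proof (rule finite_measure_mono)
        show "{w \<in> space M. ?F (Y w) \<le> min e (1/2)} \<in> sets M" by measurable
      qed (use e in auto)
      also have "\<dots> = min e (1/2)" by (rule main) (use e in auto)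
      finally show "measure M {w \<in> space M. ?F (Y w) \<le> 0} \<le> 0 + e" by simp
    qed
    then show ?thesis using True by (simp add: measure_nonneg antisym)
  next
    case False
    show ?thesis
    proof (cases "t = 1")
      case True
      have "{w \<in> space M. ?F (Y w) \<le> t} = space M" using P(3) True by auto
      then show ?thesis using True by (simp add: prob_space)
    next
      case False
      then show ?thesis using main \<open>t \<noteq> 0\<close> t by auto
    qed
  qed
qed

lemma finite_measure_eq_atMost:
  fixes \<mu> \<nu> :: "real measure"
  assumes sets: "sets \<mu> = sets borel" "sets \<nu> = sets borel"
    and fin: "finite_measure \<mu>" "finite_measure \<nu>"
    and eq: "\<And>x. emeasure \<mu> {..x} = emeasure \<nu> {..x}"
  shows "\<mu> = \<nu>"
proof -
  have sp: "space \<mu> = UNIV" "space \<nu> = UNIV" using sets_eq_imp_space_eq[OF sets(1)] sets_eq_imp_space_eq[OF sets(2)] by auto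
  have U: "emeasure \<mu> UNIV = emeasure \<nu> UNIV"
  proof -
    have un: "(\<Union>n. {..real n}) = UNIV" by (auto intro: real_arch_simple)
    have inc: "incseq (\<lambda>n. {..real n})" by (auto simp: incseq_def)
    have rs: "range (\<lambda>n. {..real n}) \<subseteq> sets \<mu>" "range (\<lambda>n. {..real n}) \<subseteq> sets \<nu>" using sets by auto
    have "emeasure \<mu> UNIV = (SUP n. emeasure \<mu> {..real n})"
      using SUP_emeasure_incseq[OF rs(1) inc] un by simp
    also have "\<dots> = (SUP n. emeasure \<nu> {..real n})" using eq by simp
    also have "\<dots> = emeasure \<nu> UNIV"
      using SUP_emeasure_incseq[OF rs(2) inc] un by simp
    finally show ?thesis .
  qed
  have gt: "emeasure \<mu> {x<..} = emeasure \<nu> {x<..}" for x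
  proof -
    have c: "{x<..} = UNIV - {..x}" by auto
    have f1: "emeasure \<mu> {..x} \<noteq> \<infinity>" "emeasure \<nu> {..x} \<noteq> \<infinity>"
      using finite_measure.emeasure_finite[OF fin(1)] finite_measure.emeasure_finite[OF fin(2)] by auto
    have "emeasure \<mu> {x<..} = emeasure \<mu> UNIV - emeasure \<mu> {..x}"
      unfolding c by (rule emeasure_Diff) (use sets sp f1 in auto)
    also have "\<dots> = emeasure \<nu> UNIV - emeasure \<nu> {..x}" using U eq by simp
    also have "\<dots> = emeasure \<nu> {x<..}"
      unfolding c by (rule emeasure_Diff[symmetric]) (use sets sp f1 in auto)
    finally show ?thesis .
  qed
  have fx: "emeasure \<mu> {x<..} < \<infinity>" for x
    using finite_measure.emeasure_finite[OF fin(1)] by (simp add: less_top)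
  show ?thesis
    by (rule measure_eqI_lessThan[OF sets fx gt])
qed

locale cor2_setting = prob_space M for M :: "'a measure" +
  fixes \<rho> A :: "'a \<Rightarrow> real" and C C12 Fcond :: "real \<Rightarrow> real \<Rightarrow> real"
  assumes rho_meas[measurable]: "\<rho> \<in> borel_measurable M"
    and rho_pos: "AE w in M. 0 < \<rho> w"
    and rho_int: "integrable M \<rho>"
    and A_meas[measurable]: "A \<in> borel_measurable M"
    and cop: "copula C"
    and C12: "is_copula_cond_cdf C C12"
    and Fcond: "is_cond_cdf M \<rho> A Fcond"
    and Fcond_cont: "\<forall>a. continuous_on UNIV (\<lambda>r. Fcond r a)"
    and A_cont: "continuous_on UNIV (cdf_rv M A)"
begin

definition "FA = cdf_rv M A"
definition "V w = FA (A w)"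
definition "G w = Fcond (\<rho> w) (A w)"
definition "nuA h = distr (density M h) borel A"

lemma Fc_mono: "mono (\<lambda>y. Fcond y a)"
  using Fcond unfolding is_cond_cdf_def by blast
lemma Fc_meas[measurable]: "(\<lambda>x. Fcond y x) \<in> borel_measurable borel"
  using Fcond unfolding is_cond_cdf_def by blast
lemma Fc_bot: "((\<lambda>y. Fcond y a) \<longlongrightarrow> 0) at_bot"
  using Fcond unfolding is_cond_cdf_def by blast
lemma Fc_top: "((\<lambda>y. Fcond y a) \<longlongrightarrow> 1) at_top"
  using Fcond unfolding is_cond_cdf_def by blast
lemma Fc_ident: "measure M {w \<in> space M. \<rho> w \<le> y \<and> A w \<le> a}
              = (\<integral>w. indicator {..a} (A w) * Fcond y (A w) \<partial>M)"
  using Fcond unfolding is_cond_cdf_def by blast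
lemma Fc_cont: "continuous_on UNIV (\<lambda>r. Fcond r a)"
  using Fcond_cont by blast
lemma Fc_nonneg: "0 \<le> Fcond y a"
  by (rule mono_ge_lim_bot[OF Fc_mono Fc_bot])
lemma Fc_le1: "Fcond y a \<le> 1"
  by (rule mono_le_lim_top[OF Fc_mono Fc_top])
lemma Fc_monoD: "y \<le> y' \<Longrightarrow> Fcond y a \<le> Fcond y' a"
  using Fc_mono unfolding mono_def by blast

lemma FA_props: "mono FA" "0 \<le> FA y" "FA y \<le> 1" "(FA \<longlongrightarrow> 0) at_bot" "(FA \<longlongrightarrow> 1) at_top"
  "continuous_on UNIV FA"
  using cdf_rv_props[OF A_meas] A_cont unfolding FA_def by auto

lemma FA_meas[measurable]: "FA \<in> borel_measurable borel"
  by (rule borel_measurable_mono[OF FA_props(1)])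

lemma V_meas[measurable]: "V \<in> borel_measurable M"
  unfolding V_def by measurable

lemma V_range: "0 \<le> V w" "V w \<le> 1"
  unfolding V_def using FA_props by auto

lemma G_range: "0 \<le> G w" "G w \<le> 1"
  unfolding G_def using Fc_nonneg Fc_le1 by auto

lemma Fc_left_approx:
  assumes "t < Fcond r a"
  shows "\<exists>q\<in>\<rat>. q < r \<and> t < Fcond q a"
proof -
  have "isCont (\<lambda>r. Fcond r a) r" using Fc_cont continuous_on_eq_continuous_at by blast
  then have "((\<lambda>r. Fcond r a) \<longlongrightarrow> Fcond r a) (at_left r)"
    by (simp add: filterlim_at_split isCont_def)
  then have "\<forall>\<^sub>F x in at_left r. t < Fcond x a" using order_tendstoD(1) assms by blast
  then obtain b where b: "b < r" "\<And>y. b < y \<Longrightarrow> y < r \<Longrightarrow> t < Fcond y a"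
    unfolding eventually_at_left_field by blast
  obtain q where "q \<in> \<rat>" "b < q" "q < r" using Rats_dense_in_real[OF b(1)] by blast
  then show ?thesis using b(2) by blast
qed

lemma G_meas[measurable]: "G \<in> borel_measurable M"
proof -
  have eq: "{w \<in> space M. c < G w} = (\<Union>q\<in>\<rat>. {w \<in> space M. q < \<rho> w \<and> c < Fcond q (A w)})" for c
  proof safe
    fix w assume "w \<in> space M" "c < G w"
    then obtain q where "q \<in> \<rat>" "q < \<rho> w" "c < Fcond q (A w)"
      using Fc_left_approx[of c "\<rho> w" "A w"] unfolding G_def by blast
    then show "w \<in> (\<Union>q\<in>\<rat>. {w \<in> space M. q < \<rho> w \<and> c < Fcond q (A w)})" using \<open>w \<in> space M\<close> by blast
  next
    fix w q assume "w \<in> space M" "q \<in> \<rat>" "q < \<rho> w" "c < Fcond q (A w)"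
    then show "c < G w" unfolding G_def using Fc_monoD[of q "\<rho> w" "A w"] by linarith
  qed
  show ?thesis
  proof (rule borel_measurableI_greater)
    fix c
    have "\<And>q. {w\<in>space M. q < \<rho> w \<and> c < Fcond q (A w)} \<in> sets M" by measurable
    then show "{w \<in> space M. c < G w} \<in> sets M"
      unfolding eq by (intro sets.countable_UN' countable_rat) auto
  qed
qed

lemma sets_nuA[simp, measurable_cong]: "sets (nuA h) = sets borel"
  by (simp add: nuA_def)

lemma emeasure_nuA:
  assumes [measurable]: "h \<in> borel_measurable M" "B \<in> sets borel"
  shows "emeasure (nuA h) B = (\<integral>\<^sup>+w. h w * indicator B (A w) \<partial>M)"
proof -
  have "emeasure (nuA h) B = emeasure (density M h) (A -` B \<inter> space M)"
    unfolding nuA_def using emeasure_distr[of A "density M h" borel B] by simp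
  also have "\<dots> = (\<integral>\<^sup>+w. h w * indicator (A -` B \<inter> space M) w \<partial>M)"
    by (rule emeasure_density) auto
  also have "\<dots> = (\<integral>\<^sup>+w. h w * indicator B (A w) \<partial>M)"
    by (rule nn_integral_cong) (auto split: split_indicator)
  finally show ?thesis .
qed

lemma nuA_eq:
  assumes [measurable]: "h1 \<in> borel_measurable M" "h2 \<in> borel_measurable M"
    and fin: "(\<integral>\<^sup>+w. h1 w \<partial>M) < \<infinity>" "(\<integral>\<^sup>+w. h2 w \<partial>M) < \<infinity>"
    and eq: "\<And>a. (\<integral>\<^sup>+w. h1 w * indicator {..a} (A w) \<partial>M) = (\<integral>\<^sup>+w. h2 w * indicator {..a} (A w) \<partial>M)"
    and B[measurable]: "B \<in> sets borel"
  shows "(\<integral>\<^sup>+w. h1 w * indicator B (A w) \<partial>M) = (\<integral>\<^sup>+w. h2 w * indicator B (A w) \<partial>M)"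
proof -
  have fm: "finite_measure (nuA h)" if [measurable]: "h \<in> borel_measurable M" and f: "(\<integral>\<^sup>+w. h w \<partial>M) < \<infinity>" for h
  proof (rule finite_measureI)
    have "emeasure (nuA h) (space (nuA h)) = (\<integral>\<^sup>+w. h w * indicator UNIV (A w) \<partial>M)"
      by (subst emeasure_nuA) (auto simp: nuA_def)
    also have "\<dots> = (\<integral>\<^sup>+w. h w \<partial>M)" by simp
    finally show "emeasure (nuA h) (space (nuA h)) \<noteq> \<infinity>" using f by simp
  qed
  have "nuA h1 = nuA h2"
    by (rule finite_measure_eq_atMost) (auto simp: emeasure_nuA eq intro: fm fin)
  then show ?thesis using emeasure_nuA[of h1 B] emeasure_nuA[of h2 B] by simp
qed

end

lemma emeasure_split_countable:
  fixes \<mu> :: "real measure" and R :: "real \<Rightarrow> real"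
  assumes sets: "sets \<mu> = sets borel" and R[measurable]: "R \<in> borel_measurable borel"
    and cR: "countable (range R)" and B[measurable]: "B \<in> sets borel"
  shows "emeasure \<mu> B = (\<integral>\<^sup>+c. emeasure \<mu> (B \<inter> R -` {c}) \<partial>count_space (range R))"
proof -
  have Bc: "B \<inter> R -` {c} \<in> sets borel" for c
  proof -
    have "R -` {c} = {x \<in> space borel. R x = c}" by auto
    also have "\<dots> \<in> sets borel" by measurable
    finally show ?thesis using B by (intro sets.Int) auto
  qed
  have "B = (\<Union>c\<in>range R. B \<inter> R -` {c})" by blast
  moreover have "emeasure \<mu> (\<Union>c\<in>range R. B \<inter> R -` {c}) = (\<integral>\<^sup>+c. emeasure \<mu> (B \<inter> R -` {c}) \<partial>count_space (range R))"
  proof (rule emeasure_UN_countable)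
    fix c show "B \<inter> R -` {c} \<in> sets \<mu>"
      unfolding sets by (rule Bc)
  next
    show "countable (range R)" by (rule cR)
  next
    show "disjoint_family_on (\<lambda>c. B \<inter> R -` {c}) (range R)"
      unfolding disjoint_family_on_def by blast
  qed
  ultimately show ?thesis by simp
qed

context cor2_setting
begin

lemma Fc_meas2[measurable (raw)]:
  assumes f[measurable]: "f \<in> borel_measurable N" and g[measurable]: "g \<in> borel_measurable N"
  shows "(\<lambda>x. Fcond (f x) (g x)) \<in> borel_measurable N"
proof -
  have eq: "{w \<in> space N. c < Fcond (f w) (g w)} = (\<Union>q\<in>\<rat>. {w \<in> space N. q < f w \<and> c < Fcond q (g w)})" for c
  proof safe
    fix w assume "w \<in> space N" "c < Fcond (f w) (g w)"
    then obtain q where "q \<in> \<rat>" "q < f w" "c < Fcond q (g w)"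
      using Fc_left_approx[of c "f w" "g w"] by blast
    then show "w \<in> (\<Union>q\<in>\<rat>. {w \<in> space N. q < f w \<and> c < Fcond q (g w)})" using \<open>w \<in> space N\<close> by blast
  next
    fix w q assume "w \<in> space N" "q \<in> \<rat>" "q < f w" "c < Fcond q (g w)"
    then show "c < Fcond (f w) (g w)" using Fc_monoD[of q "f w" "g w"] by linarith
  qed
  show ?thesis
  proof (rule borel_measurableI_greater)
    fix c
    have "\<And>q. {w\<in>space N. q < f w \<and> c < Fcond q (g w)} \<in> sets N" by measurable
    then show "{w \<in> space N. c < Fcond (f w) (g w)} \<in> sets N"
      unfolding eq by (intro sets.countable_UN' countable_rat) auto
  qed
qed

lemma nn_eq_int_bdd:
  assumes [measurable]: "f \<in> borel_measurable M" and b: "\<And>w. w \<in> space M \<Longrightarrow> 0 \<le> f w \<and> f w \<le> c"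
  shows "(\<integral>\<^sup>+w. ennreal (f w) \<partial>M) = ennreal (\<integral>w. f w \<partial>M)" "integrable M f"
proof -
  show i: "integrable M f"
    by (rule integrable_const_bound[where B=c]) (use b in auto)
  show "(\<integral>\<^sup>+w. ennreal (f w) \<partial>M) = ennreal (\<integral>w. f w \<partial>M)"
    by (rule nn_integral_eq_integral[OF i]) (use b in auto)
qed

lemma D_const:
  assumes B[measurable]: "B \<in> sets borel"
  shows "(\<integral>\<^sup>+w. indicator {w\<in>space M. \<rho> w \<le> y} w * indicator B (A w) \<partial>M)
       = (\<integral>\<^sup>+w. ennreal (Fcond y (A w)) * indicator B (A w) \<partial>M)"
proof (rule nuA_eq)
  show "(\<integral>\<^sup>+ w. indicator {w \<in> space M. \<rho> w \<le> y} w \<partial>M) < \<infinity>"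
    by (simp add: less_top[symmetric])
  have "(\<integral>\<^sup>+ w. ennreal (Fcond y (A w)) \<partial>M) = ennreal (\<integral>w. Fcond y (A w) \<partial>M)"
    by (rule nn_eq_int_bdd(1)[where c=1]) (auto simp: Fc_nonneg Fc_le1)
  then show "(\<integral>\<^sup>+ w. ennreal (Fcond y (A w)) \<partial>M) < \<infinity>" by simp
  fix a
  have "(\<integral>\<^sup>+w. indicator {w\<in>space M. \<rho> w \<le> y} w * indicator {..a} (A w) \<partial>M)
      = (\<integral>\<^sup>+w. indicator {w\<in>space M. \<rho> w \<le> y \<and> A w \<le> a} w \<partial>M)"
    by (rule nn_integral_cong) (auto split: split_indicator)
  also have "\<dots> = emeasure M {w\<in>space M. \<rho> w \<le> y \<and> A w \<le> a}"
    by (rule nn_integral_indicator) measurable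
  also have "\<dots> = ennreal (\<integral>w. indicator {..a} (A w) * Fcond y (A w) \<partial>M)"
    by (simp add: emeasure_eq_measure Fc_ident)
  also have "\<dots> = (\<integral>\<^sup>+w. ennreal (indicator {..a} (A w) * Fcond y (A w)) \<partial>M)"
    by (rule nn_eq_int_bdd(1)[where c=1, symmetric]) (auto simp: Fc_nonneg Fc_le1 split: split_indicator)
  also have "\<dots> = (\<integral>\<^sup>+w. ennreal (Fcond y (A w)) * indicator {..a} (A w) \<partial>M)"
    by (rule nn_integral_cong) (auto split: split_indicator)
  finally show "(\<integral>\<^sup>+w. indicator {w\<in>space M. \<rho> w \<le> y} w * indicator {..a} (A w) \<partial>M)
      = (\<integral>\<^sup>+w. ennreal (Fcond y (A w)) * indicator {..a} (A w) \<partial>M)" .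
qed auto

lemma D_countable:
  assumes R[measurable]: "R \<in> borel_measurable borel" and cR: "countable (range R)"
    and B[measurable]: "B \<in> sets borel"
  shows "(\<integral>\<^sup>+w. indicator {w\<in>space M. \<rho> w \<le> R (A w)} w * indicator B (A w) \<partial>M)
       = (\<integral>\<^sup>+w. ennreal (Fcond (R (A w)) (A w)) * indicator B (A w) \<partial>M)"
proof -
  define h1 where "h1 w = (indicator {w\<in>space M. \<rho> w \<le> R (A w)} w :: ennreal)" for w
  define h2 where "h2 w = ennreal (Fcond (R (A w)) (A w))" for w
  have [measurable]: "h1 \<in> borel_measurable M" "h2 \<in> borel_measurable M"
    unfolding h1_def h2_def by measurable
  have Bc[measurable]: "B \<inter> R -` {c} \<in> sets borel" for c
  proof -
    have "R -` {c} = {x \<in> space borel. R x = c}" by auto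
    also have "\<dots> \<in> sets borel" by measurable
    finally show ?thesis using B by (intro sets.Int) auto
  qed
  have piece: "emeasure (nuA h1) (B \<inter> R -` {c}) = emeasure (nuA h2) (B \<inter> R -` {c})" for c
  proof -
    have "emeasure (nuA h1) (B \<inter> R -` {c}) = (\<integral>\<^sup>+w. h1 w * indicator (B \<inter> R -` {c}) (A w) \<partial>M)"
      by (rule emeasure_nuA) auto
    also have "\<dots> = (\<integral>\<^sup>+w. indicator {w\<in>space M. \<rho> w \<le> c} w * indicator (B \<inter> R -` {c}) (A w) \<partial>M)"
      by (rule nn_integral_cong) (auto simp: h1_def split: split_indicator)
    also have "\<dots> = (\<integral>\<^sup>+w. ennreal (Fcond c (A w)) * indicator (B \<inter> R -` {c}) (A w) \<partial>M)"
      by (rule D_const) (rule Bc)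
    also have "\<dots> = (\<integral>\<^sup>+w. h2 w * indicator (B \<inter> R -` {c}) (A w) \<partial>M)"
      by (rule nn_integral_cong) (auto simp: h2_def split: split_indicator)
    also have "\<dots> = emeasure (nuA h2) (B \<inter> R -` {c})"
      by (rule emeasure_nuA[symmetric]) auto
    finally show ?thesis .
  qed
  have "emeasure (nuA h1) B = emeasure (nuA h2) B"
    by (simp add: emeasure_split_countable[OF _ R cR B] piece)
  then show ?thesis
    using emeasure_nuA[of h1 B] emeasure_nuA[of h2 B] by (simp add: h1_def h2_def)
qed

lemma D_countable_real:
  assumes R[measurable]: "R \<in> borel_measurable borel" and cR: "countable (range R)"
    and B[measurable]: "B \<in> sets borel"
  shows "measure M {w\<in>space M. \<rho> w \<le> R (A w) \<and> A w \<in> B} = (\<integral>w. Fcond (R (A w)) (A w) * indicator B (A w) \<partial>M)"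
proof -
  have "ennreal (measure M {w\<in>space M. \<rho> w \<le> R (A w) \<and> A w \<in> B}) = emeasure M {w\<in>space M. \<rho> w \<le> R (A w) \<and> A w \<in> B}"
    by (simp add: emeasure_eq_measure)
  also have "\<dots> = (\<integral>\<^sup>+w. indicator {w\<in>space M. \<rho> w \<le> R (A w) \<and> A w \<in> B} w \<partial>M)"
    by (rule nn_integral_indicator[symmetric]) measurable
  also have "\<dots> = (\<integral>\<^sup>+w. indicator {w\<in>space M. \<rho> w \<le> R (A w)} w * indicator B (A w) \<partial>M)"
    by (rule nn_integral_cong) (auto split: split_indicator)
  also have "\<dots> = (\<integral>\<^sup>+w. ennreal (Fcond (R (A w)) (A w)) * indicator B (A w) \<partial>M)"
    by (rule D_countable[OF R cR B])
  also have "\<dots> = (\<integral>\<^sup>+w. ennreal (Fcond (R (A w)) (A w) * indicator B (A w)) \<partial>M)"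
    by (rule nn_integral_cong) (auto split: split_indicator)
  also have "\<dots> = ennreal (\<integral>w. Fcond (R (A w)) (A w) * indicator B (A w) \<partial>M)"
    by (rule nn_eq_int_bdd(1)[where c=1]) (auto simp: Fc_nonneg Fc_le1 split: split_indicator)
  finally show ?thesis
    by (subst (asm) ennreal_inj) (auto simp: Fc_nonneg intro!: integral_nonneg_AE)
qed

lemma D_general:
  assumes R[measurable]: "R \<in> borel_measurable borel" and B[measurable]: "B \<in> sets borel"
  shows "measure M {w\<in>space M. \<rho> w \<le> R (A w) \<and> A w \<in> B} = (\<integral>w. Fcond (R (A w)) (A w) * indicator B (A w) \<partial>M)"
proof -
  define Rk where "Rk k a = real_of_int \<lceil>real (Suc k) * R a\<rceil> / real (Suc k)" for k a
  have Rk_meas[measurable]: "Rk k \<in> borel_measurable borel" for k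
    unfolding Rk_def by measurable
  have cRk: "countable (range (Rk k))" for k
  proof -
    have "range (Rk k) \<subseteq> (\<lambda>j::int. real_of_int j / real (Suc k)) ` UNIV" unfolding Rk_def by auto
    moreover have "countable ((\<lambda>j::int. real_of_int j / real (Suc k)) ` UNIV)" by simp
    ultimately show ?thesis by (rule countable_subset)
  qed
  have bnd: "R a \<le> Rk k a" "Rk k a \<le> R a + 1 / real (Suc k)" for k a
  proof -
    have p: "0 < real (Suc k)" by simp
    have c1: "real (Suc k) * R a \<le> real_of_int \<lceil>real (Suc k) * R a\<rceil>" by (rule le_of_int_ceiling)
    have c2: "real_of_int \<lceil>real (Suc k) * R a\<rceil> < real (Suc k) * R a + 1"
      using ceiling_correct[of "real (Suc k) * R a"] by linarith
    have "R a = (real (Suc k) * R a) / real (Suc k)" using p by simp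
    also have "\<dots> \<le> Rk k a" unfolding Rk_def using c1 p by (intro divide_right_mono) auto
    finally show "R a \<le> Rk k a" .
    have "Rk k a \<le> (real (Suc k) * R a + 1) / real (Suc k)" unfolding Rk_def using c2 p by (intro divide_right_mono) auto
    also have "\<dots> = R a + 1 / real (Suc k)" using p by (simp add: add_divide_distrib)
    finally show "Rk k a \<le> R a + 1 / real (Suc k)" .
  qed
  have Rk_lim: "(\<lambda>k. Rk k a) \<longlonglongrightarrow> R a" for a
  proof (rule tendsto_sandwich[where f="\<lambda>k. R a" and h="\<lambda>k. R a + 1 / real (Suc k)"])
    show "\<forall>\<^sub>F k in sequentially. R a \<le> Rk k a" using bnd by auto
    show "\<forall>\<^sub>F k in sequentially. Rk k a \<le> R a + 1 / real (Suc k)" using bnd by auto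
    have "(\<lambda>k. 1 / real (Suc k)) \<longlonglongrightarrow> 0" by (rule LIMSEQ_Suc[OF lim_const_over_n])
    then show "(\<lambda>k. R a + 1 / real (Suc k)) \<longlonglongrightarrow> R a" using tendsto_add[OF tendsto_const, of _ 0 sequentially "R a"] by simp
  qed simp
  define S where "S k = {w\<in>space M. \<rho> w \<le> Rk k (A w) \<and> A w \<in> B}" for k
  define S0 where "S0 = {w\<in>space M. \<rho> w \<le> R (A w) \<and> A w \<in> B}"
  have Ssets[measurable]: "S k \<in> sets M" "S0 \<in> sets M" for k unfolding S_def S0_def by measurable
  have eqk: "measure M (S k) = (\<integral>w. Fcond (Rk k (A w)) (A w) * indicator B (A w) \<partial>M)" for k
    unfolding S_def by (rule D_countable_real[OF Rk_meas cRk B])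
  have L1: "(\<lambda>k. measure M (S k)) \<longlonglongrightarrow> measure M S0"
  proof -
    have "(\<lambda>k. \<integral>w. (indicator (S k) w :: real) \<partial>M) \<longlonglongrightarrow> (\<integral>w. (indicator S0 w :: real) \<partial>M)"
    proof (rule integral_dominated_convergence[where w="\<lambda>_. 1"])
      show "AE x in M. (\<lambda>k. indicator (S k) x :: real) \<longlonglongrightarrow> indicator S0 x"
      proof (rule AE_I2)
        fix x assume x: "x \<in> space M"
        show "(\<lambda>k. indicator (S k) x :: real) \<longlonglongrightarrow> indicator S0 x"
        proof (cases "\<rho> x \<le> R (A x)")
          case True
          moreover have "\<forall>k. R (A x) \<le> Rk k (A x)" using bnd by blast
          ultimately have "\<And>k. indicator (S k) x = (indicator S0 x :: real)"
            using x unfolding S_def S0_def by (auto split: split_indicator intro: order_trans)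
          then show ?thesis by simp
        next
          case False
          then have "\<forall>\<^sub>F k in sequentially. Rk k (A x) < \<rho> x"
            using order_tendstoD(2)[OF Rk_lim[of "A x"]] by simp
          then have "\<forall>\<^sub>F k in sequentially. indicator (S k) x = (indicator S0 x :: real)"
            by eventually_elim (use False in \<open>auto simp: S_def S0_def split: split_indicator\<close>)
          then show ?thesis by (rule tendsto_eventually)
        qed
      qed
    qed (auto split: split_indicator)
    then show ?thesis by simp
  qed
  have L2: "(\<lambda>k. \<integral>w. Fcond (Rk k (A w)) (A w) * indicator B (A w) \<partial>M) \<longlonglongrightarrow> (\<integral>w. Fcond (R (A w)) (A w) * indicator B (A w) \<partial>M)"
  proof (rule integral_dominated_convergence[where w="\<lambda>_. 1"])
    show "AE x in M. (\<lambda>k. Fcond (Rk k (A x)) (A x) * indicator B (A x)) \<longlonglongrightarrow> Fcond (R (A x)) (A x) * indicator B (A x)"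
    proof (rule AE_I2)
      fix x
      have "isCont (\<lambda>r. Fcond r (A x)) (R (A x))" using Fc_cont continuous_on_eq_continuous_at by blast
      from isCont_tendsto_compose[OF this Rk_lim]
      show "(\<lambda>k. Fcond (Rk k (A x)) (A x) * indicator B (A x)) \<longlonglongrightarrow> Fcond (R (A x)) (A x) * indicator B (A x)"
        by (intro tendsto_mult_right)
    qed
    show "AE x in M. norm (Fcond (Rk k (A x)) (A x) * indicator B (A x)) \<le> 1" for k
      using Fc_nonneg Fc_le1 by (auto split: split_indicator)
  qed auto
  show ?thesis
    using LIMSEQ_unique[OF L1 L2[folded eqk]] unfolding S0_def .
qed

end

context cor2_setting
begin

lemma integrable_bdd:
  fixes f :: "'a \<Rightarrow> real"
  assumes [measurable]: "f \<in> borel_measurable M" and b: "\<And>w. w \<in> space M \<Longrightarrow> \<bar>f w\<bar> \<le> c"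
  shows "integrable M f"
  by (rule integrable_const_bound[where B=c]) (use b in auto)

lemma measure_A_in:
  assumes [measurable]: "B \<in> sets borel"
  shows "measure M {w\<in>space M. A w \<in> B} = (\<integral>w. indicator B (A w) \<partial>M)"
proof -
  have "(\<integral>w. indicator B (A w) \<partial>M) = (\<integral>w. indicator {w\<in>space M. A w \<in> B} w \<partial>M)"
    by (rule Bochner_Integration.integral_cong) (auto split: split_indicator)
  also have "\<dots> = measure M {w\<in>space M. A w \<in> B}" by simp
  finally show ?thesis by simp
qed

lemma U_mid:
  assumes \<tau>[measurable]: "\<tau> \<in> borel_measurable borel" and B[measurable]: "B \<in> sets borel"
    and Bsub: "B \<subseteq> {a. 0 < \<tau> a \<and> \<tau> a < 1}"
  shows "measure M {w\<in>space M. G w \<le> \<tau> (A w) \<and> A w \<in> B} = (\<integral>w. \<tau> (A w) * indicator B (A w) \<partial>M)"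
proof -
  define Q where "Q a = (if 0 < \<tau> a \<and> \<tau> a < 1 then Sup {r. Fcond r a \<le> \<tau> a} else 0)" for a
  have lev: "Fcond (Q a) a = \<tau> a" "\<And>r. Fcond r a \<le> \<tau> a \<longleftrightarrow> r \<le> Q a" if "0 < \<tau> a" "\<tau> a < 1" for a
  proof -
    have q: "Q a = Sup {r. Fcond r a \<le> \<tau> a}" using that by (simp add: Q_def)
    show "Fcond (Q a) a = \<tau> a" unfolding q by (rule cont_cdf_level(1)[OF Fc_cont Fc_mono Fc_bot Fc_top that])
    show "\<And>r. Fcond r a \<le> \<tau> a \<longleftrightarrow> r \<le> Q a" unfolding q by (rule cont_cdf_level(2)[OF Fc_cont Fc_mono Fc_bot Fc_top that])
  qed
  have Qm[measurable]: "Q \<in> borel_measurable borel"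
    unfolding borel_measurable_iff_less
  proof
    fix s
    have "{a \<in> space borel. Q a < s} = {a \<in> space borel. (\<not>(0 < \<tau> a \<and> \<tau> a < 1) \<and> 0 < s) \<or> ((0 < \<tau> a \<and> \<tau> a < 1) \<and> \<tau> a < Fcond s a)}"
    proof (intro Collect_cong conj_cong refl)
      fix a
      show "Q a < s \<longleftrightarrow> (\<not>(0 < \<tau> a \<and> \<tau> a < 1) \<and> 0 < s) \<or> ((0 < \<tau> a \<and> \<tau> a < 1) \<and> \<tau> a < Fcond s a)"
      proof (cases "0 < \<tau> a \<and> \<tau> a < 1")
        case True
        then show ?thesis using lev(2)[of a s] by auto
      next
        case False
        then show ?thesis unfolding Q_def by auto
      qed
    qed
    also have "\<dots> \<in> sets borel" by measurable
    finally show "{a \<in> space borel. Q a < s} \<in> sets borel" .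
  qed
  have "{w\<in>space M. G w \<le> \<tau> (A w) \<and> A w \<in> B} = {w\<in>space M. \<rho> w \<le> Q (A w) \<and> A w \<in> B}"
  proof -
    have iff: "G w \<le> \<tau> (A w) \<longleftrightarrow> \<rho> w \<le> Q (A w)" if "A w \<in> B" for w
    proof -
      have "0 < \<tau> (A w)" "\<tau> (A w) < 1" using Bsub that by auto
      then show "G w \<le> \<tau> (A w) \<longleftrightarrow> \<rho> w \<le> Q (A w)" unfolding G_def by (rule lev(2))
    qed
    show ?thesis using iff by blast
  qed
  then have "measure M {w\<in>space M. G w \<le> \<tau> (A w) \<and> A w \<in> B} = (\<integral>w. Fcond (Q (A w)) (A w) * indicator B (A w) \<partial>M)"
    using D_general[OF Qm B] by simp
  also have "\<dots> = (\<integral>w. \<tau> (A w) * indicator B (A w) \<partial>M)"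
    by (rule Bochner_Integration.integral_cong) (use Bsub lev(1) in \<open>auto split: split_indicator\<close>)
  finally show ?thesis .
qed

lemma U_low:
  assumes \<tau>[measurable]: "\<tau> \<in> borel_measurable borel" and B[measurable]: "B \<in> sets borel"
    and Bsub: "B \<subseteq> {a. \<tau> a \<le> 0}"
  shows "measure M {w\<in>space M. G w \<le> \<tau> (A w) \<and> A w \<in> B} = 0"
proof -
  have "measure M {w\<in>space M. G w \<le> \<tau> (A w) \<and> A w \<in> B} \<le> 0"
  proof (rule field_le_epsilon)
    fix e :: real assume e: "0 < e"
    define e' where "e' = min e (1/2)"
    have e': "0 < e'" "e' < 1" "e' \<le> e" using e by (auto simp: e'_def)
    have "measure M {w\<in>space M. G w \<le> \<tau> (A w) \<and> A w \<in> B} \<le> measure M {w\<in>space M. G w \<le> (\<lambda>_. e') (A w) \<and> A w \<in> UNIV}"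
    proof (rule finite_measure_mono)
      show "{w\<in>space M. G w \<le> \<tau> (A w) \<and> A w \<in> B} \<subseteq> {w\<in>space M. G w \<le> (\<lambda>_. e') (A w) \<and> A w \<in> UNIV}"
        using Bsub e' by fastforce
    qed measurable
    also have "\<dots> = (\<integral>w. e' * indicator UNIV (A w) \<partial>M)"
      by (rule U_mid) (use e' in auto)
    also have "\<dots> = e'" by (simp add: prob_space)
    finally show "measure M {w\<in>space M. G w \<le> \<tau> (A w) \<and> A w \<in> B} \<le> 0 + e" using e' by simp
  qed
  then show ?thesis by (simp add: antisym measure_nonneg)
qed

lemma U_lemma:
  assumes \<tau>[measurable]: "\<tau> \<in> borel_measurable borel" and \<tau>r: "\<And>a. 0 \<le> \<tau> a" "\<And>a. \<tau> a \<le> 1"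
    and B[measurable]: "B \<in> sets borel"
  shows "measure M {w\<in>space M. G w \<le> \<tau> (A w) \<and> A w \<in> B} = (\<integral>w. \<tau> (A w) * indicator B (A w) \<partial>M)"
proof -
  define B1 where "B1 = B \<inter> {a. 0 < \<tau> a \<and> \<tau> a < 1}"
  define B2 where "B2 = B \<inter> {a. 1 \<le> \<tau> a}"
  define B3 where "B3 = B \<inter> {a. \<tau> a \<le> 0}"
  have Bs[measurable]: "B1 \<in> sets borel" "B2 \<in> sets borel" "B3 \<in> sets borel"
    unfolding B1_def B2_def B3_def by measurable
  define S where "S X = {w\<in>space M. G w \<le> \<tau> (A w) \<and> A w \<in> X}" for X
  have Ss[measurable]: "S X \<in> sets M" if [measurable]: "X \<in> sets borel" for X unfolding S_def by measurable
  have split: "S B = S B1 \<union> S B2 \<union> S B3" "S B1 \<inter> S B2 = {}" "(S B1 \<union> S B2) \<inter> S B3 = {}"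
    unfolding S_def B1_def B2_def B3_def by (auto simp: not_less)
  have msum: "measure M (S B) = measure M (S B1) + measure M (S B2) + measure M (S B3)"
    unfolding split(1) by (subst finite_measure_Union) (auto simp: split finite_measure_Union)
  have m3: "measure M (S B3) = 0" unfolding S_def by (rule U_low) (auto simp: B3_def)
  have m1: "measure M (S B1) = (\<integral>w. \<tau> (A w) * indicator B1 (A w) \<partial>M)"
    unfolding S_def by (rule U_mid) (auto simp: B1_def)
  have m2: "measure M (S B2) = (\<integral>w. \<tau> (A w) * indicator B2 (A w) \<partial>M)"
  proof -
    have "S B2 = {w\<in>space M. A w \<in> B2}" unfolding S_def B2_def using G_range \<tau>r
      by (auto intro: order_trans)
    then have "measure M (S B2) = (\<integral>w. indicator B2 (A w) \<partial>M)" using measure_A_in[of B2] by simp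
    also have "\<dots> = (\<integral>w. \<tau> (A w) * indicator B2 (A w) \<partial>M)"
      by (rule Bochner_Integration.integral_cong) (use \<tau>r in \<open>auto simp: B2_def split: split_indicator intro: antisym\<close>)
    finally show ?thesis .
  qed
  have i3: "(\<integral>w. \<tau> (A w) * indicator B3 (A w) \<partial>M) = 0"
    by (rule integral_eq_zero_AE) (use \<tau>r in \<open>auto simp: B3_def split: split_indicator intro: antisym\<close>)
  have int: "integrable M (\<lambda>w. \<tau> (A w) * indicator X (A w))" if [measurable]: "X \<in> sets borel" for X
    by (rule integrable_bdd[where c=1]) (use \<tau>r in \<open>auto split: split_indicator simp: abs_le_iff intro: order_trans\<close>)
  have "(\<integral>w. \<tau> (A w) * indicator B (A w) \<partial>M) = (\<integral>w. \<tau> (A w) * indicator B1 (A w) + \<tau> (A w) * indicator B2 (A w) + \<tau> (A w) * indicator B3 (A w) \<partial>M)"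
    by (rule Bochner_Integration.integral_cong) (auto simp: B1_def B2_def B3_def split: split_indicator)
  also have "\<dots> = (\<integral>w. \<tau> (A w) * indicator B1 (A w) \<partial>M) + (\<integral>w. \<tau> (A w) * indicator B2 (A w) \<partial>M) + (\<integral>w. \<tau> (A w) * indicator B3 (A w) \<partial>M)"
    using int[OF Bs(1)] int[OF Bs(2)] int[OF Bs(3)] by simp
  finally have isum: "(\<integral>w. \<tau> (A w) * indicator B (A w) \<partial>M) = (\<integral>w. \<tau> (A w) * indicator B1 (A w) \<partial>M) + (\<integral>w. \<tau> (A w) * indicator B2 (A w) \<partial>M) + (\<integral>w. \<tau> (A w) * indicator B3 (A w) \<partial>M)" .
  have "measure M (S B) = (\<integral>w. \<tau> (A w) * indicator B (A w) \<partial>M)"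
    using msum isum m1 m2 m3 i3 by simp
  then show ?thesis by (simp add: S_def)
qed

lemma V_le: "0 \<le> v \<Longrightarrow> v \<le> 1 \<Longrightarrow> measure M {w\<in>space M. V w \<le> v} = v"
  unfolding V_def FA_def by (rule cdf_self_le[OF A_meas A_cont])

lemma V_distr: "distributed M lborel V (\<lambda>x. indicator {0..1} x / measure lborel {0..1::real})"
  by (rule uniform_distrI_borel_atLeastAtMost) (auto simp: V_le)

lemma V_int:
  fixes g :: "real \<Rightarrow> real"
  assumes [measurable]: "g \<in> borel_measurable borel"
  shows "(\<integral>w. g (V w) \<partial>M) = (\<integral>t. indicator {0..1} t * g t \<partial>lborel)"
  using distributed_integral[OF V_distr, of g] by simp

lemma A_V_AE: "AE w in M. (A w \<le> a \<longleftrightarrow> V w \<le> FA a)"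
proof -
  define S1 where "S1 = {w\<in>space M. A w \<le> a}"
  define S2 where "S2 = {w\<in>space M. V w \<le> FA a}"
  have [measurable]: "S1 \<in> sets M" "S2 \<in> sets M" unfolding S1_def S2_def by measurable
  have sub: "S1 \<subseteq> S2" unfolding S1_def S2_def V_def using FA_props(1) by (auto simp: mono_def)
  have "measure M S2 = FA a" unfolding S2_def using FA_props by (intro V_le) auto
  moreover have "measure M S1 = FA a" unfolding S1_def FA_def cdf_rv_def by simp
  ultimately have "measure M (S2 - S1) = 0" using finite_measure_Diff[of S2 S1] sub by simp
  then have "emeasure M (S2 - S1) = 0" by (simp add: emeasure_eq_measure)
  moreover have "{w\<in>space M. \<not> (A w \<le> a \<longleftrightarrow> V w \<le> FA a)} = S2 - S1"
    using sub unfolding S1_def S2_def by auto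
  ultimately show ?thesis by (subst AE_iff_measurable[where N="S2 - S1"]) auto
qed

end

context cor2_setting
begin

lemma C12_mono: "0 \<le> v \<Longrightarrow> v \<le> 1 \<Longrightarrow> u \<le> u' \<Longrightarrow> C12 u v \<le> C12 u' v"
  using C12 unfolding is_copula_cond_cdf_def mono_def by auto
lemma C12_neg: "0 \<le> v \<Longrightarrow> v \<le> 1 \<Longrightarrow> u < 0 \<Longrightarrow> C12 u v = 0"
  using C12 unfolding is_copula_cond_cdf_def by auto
lemma C12_top: "0 \<le> v \<Longrightarrow> v \<le> 1 \<Longrightarrow> 1 \<le> u \<Longrightarrow> C12 u v = 1"
  using C12 unfolding is_copula_cond_cdf_def by auto
lemma C12_meas[measurable]: "(\<lambda>v. C12 u v) \<in> borel_measurable borel"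
  using C12 unfolding is_copula_cond_cdf_def by auto
lemma C12_C: "0 \<le> u \<Longrightarrow> u \<le> 1 \<Longrightarrow> 0 \<le> v \<Longrightarrow> v \<le> 1 \<Longrightarrow> C u v = (LBINT t:{0..v}. C12 u t)"
  using C12 unfolding is_copula_cond_cdf_def by auto
lemma C12_range: assumes "0 \<le> v" "v \<le> 1" shows "0 \<le> C12 u v" "C12 u v \<le> 1"
proof -
  have "C12 (min u (-1)) v \<le> C12 u v" by (rule C12_mono) (use assms in auto)
  then show "0 \<le> C12 u v" using C12_neg[OF assms, of "min u (-1)"] by simp
  have "C12 u v \<le> C12 (max u 1) v" by (rule C12_mono) (use assms in auto)
  then show "C12 u v \<le> 1" using C12_top[OF assms, of "max u 1"] by simp
qed

lemma C_bd: "0 \<le> u \<Longrightarrow> u \<le> 1 \<Longrightarrow> C u 0 = 0 \<and> C 0 u = 0 \<and> C u 1 = u \<and> C 1 u = u"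
  using cop unfolding copula_def by auto

definition "K B u = (\<integral>w. C12 u (V w) * indicator B (A w) \<partial>M)"

lemma K_int: "integrable M (\<lambda>w. C12 u (V w) * indicator B (A w))" if [measurable]: "B \<in> sets borel"
  by (rule integrable_bdd[where c=1]) (use C12_range V_range in \<open>auto split: split_indicator simp: abs_le_iff intro: order_trans\<close>)

lemma V_C: assumes "0 \<le> u" "u \<le> 1" "0 \<le> v" "v \<le> 1"
  shows "(\<integral>w. C12 u (V w) * indicator {..v} (V w) \<partial>M) = C u v"
proof -
  have "(\<integral>w. C12 u (V w) * indicator {..v} (V w) \<partial>M) = (\<integral>t. indicator {0..1} t * (C12 u t * indicator {..v} t) \<partial>lborel)"
    by (rule V_int[of "\<lambda>t. C12 u t * indicator {..v} t"]) measurable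
  also have "\<dots> = (LBINT t:{0..v}. C12 u t)"
    unfolding set_lebesgue_integral_def
    by (rule Bochner_Integration.integral_cong) (use assms in \<open>auto split: split_indicator\<close>)
  also have "\<dots> = C u v" using C12_C assms by simp
  finally show ?thesis .
qed

lemma K_UNIV: "0 \<le> u \<Longrightarrow> u \<le> 1 \<Longrightarrow> K UNIV u = u"
  using V_C[of u 1] C_bd[of u] V_range unfolding K_def
  by (simp add: indicator_def)

lemma K_Aa: assumes "0 \<le> u" "u \<le> 1" shows "K {..a} u = C u (FA a)"
proof -
  have "K {..a} u = (\<integral>w. C12 u (V w) * indicator {..FA a} (V w) \<partial>M)"
    unfolding K_def
    by (rule integral_cong_AE) (use A_V_AE[of a] in \<open>auto split: split_indicator\<close>)
  also have "\<dots> = C u (FA a)" using V_C[of u "FA a"] assms FA_props by auto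
  finally show ?thesis .
qed

lemma K_mono: assumes [measurable]: "B \<in> sets borel" and "u \<le> u'" shows "K B u \<le> K B u'"
  unfolding K_def
  by (rule integral_mono[OF K_int K_int]) (use C12_mono V_range assms in \<open>auto split: split_indicator\<close>)

lemma K_nonneg: assumes [measurable]: "B \<in> sets borel" shows "0 \<le> K B u"
  unfolding K_def
  by (rule integral_nonneg_AE) (use C12_range V_range in \<open>auto split: split_indicator\<close>)

lemma K_lip: assumes [measurable]: "B \<in> sets borel" and u: "0 \<le> u" "u \<le> u'" "u' \<le> 1"
  shows "K B u' \<le> K B u + (u' - u)"
proof -
  have "K B u' - K B u = (\<integral>w. (C12 u' (V w) - C12 u (V w)) * indicator B (A w) \<partial>M)"
    unfolding K_def using K_int[of B u] K_int[of B u']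
    by (subst Bochner_Integration.integral_diff[symmetric]) (auto simp: algebra_simps intro!: Bochner_Integration.integral_cong)
  also have "\<dots> \<le> (\<integral>w. (C12 u' (V w) - C12 u (V w)) * indicator UNIV (A w) \<partial>M)"
  proof (rule integral_mono)
    show "integrable M (\<lambda>w. (C12 u' (V w) - C12 u (V w)) * indicator B (A w))"
      using K_int[of B u] K_int[of B u'] by (simp add: left_diff_distrib)
    show "integrable M (\<lambda>w. (C12 u' (V w) - C12 u (V w)) * indicator UNIV (A w))"
      using K_int[of UNIV u] K_int[of UNIV u'] by (simp add: left_diff_distrib)
    fix w show "(C12 u' (V w) - C12 u (V w)) * indicator B (A w) \<le> (C12 u' (V w) - C12 u (V w)) * indicator UNIV (A w)"
      using C12_mono[OF V_range, of u u' w] u by (auto split: split_indicator)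
  qed
  also have "\<dots> = K UNIV u' - K UNIV u"
    unfolding K_def using K_int[of UNIV u] K_int[of UNIV u']
    by (subst Bochner_Integration.integral_diff[symmetric]) (auto simp: algebra_simps intro!: Bochner_Integration.integral_cong)
  also have "\<dots> = u' - u" using K_UNIV u by simp
  finally show ?thesis by simp
qed

lemma K_le_UNIV: assumes [measurable]: "B \<in> sets borel" shows "K B u \<le> K UNIV u"
  unfolding K_def
  by (rule integral_mono[OF K_int K_int]) (use C12_range V_range in \<open>auto split: split_indicator\<close>)

lemma K_one: assumes [measurable]: "B \<in> sets borel" shows "K B 1 = measure M {w\<in>space M. A w \<in> B}"
  unfolding K_def measure_A_in[OF assms]
  by (rule Bochner_Integration.integral_cong) (use C12_top V_range in auto)

lemma Eu_B:
  assumes [measurable]: "B \<in> sets borel"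
  shows "measure M {w\<in>space M. 1 - C12 u (V w) < G w \<and> A w \<in> B} = K B u"
proof -
  define \<tau> where "\<tau> a = 1 - C12 u (FA a)" for a
  have [measurable]: "\<tau> \<in> borel_measurable borel" unfolding \<tau>_def by measurable
  have \<tau>r: "0 \<le> \<tau> a" "\<tau> a \<le> 1" for a unfolding \<tau>_def using C12_range[of "FA a" u] FA_props by auto
  have U: "measure M {w\<in>space M. G w \<le> \<tau> (A w) \<and> A w \<in> B} = (\<integral>w. \<tau> (A w) * indicator B (A w) \<partial>M)"
    by (rule U_lemma) (auto simp: \<tau>r)
  have seq: "{w\<in>space M. 1 - C12 u (V w) < G w \<and> A w \<in> B} = {w\<in>space M. A w \<in> B} - {w\<in>space M. G w \<le> \<tau> (A w) \<and> A w \<in> B}"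
    unfolding \<tau>_def V_def by auto
  then have "measure M {w\<in>space M. 1 - C12 u (V w) < G w \<and> A w \<in> B} = measure M {w\<in>space M. A w \<in> B} - measure M {w\<in>space M. G w \<le> \<tau> (A w) \<and> A w \<in> B}"
  proof -
    have m: "{w\<in>space M. A w \<in> B} \<in> sets M" "{w\<in>space M. G w \<le> \<tau> (A w) \<and> A w \<in> B} \<in> sets M" by measurable
    have sub: "{w\<in>space M. G w \<le> \<tau> (A w) \<and> A w \<in> B} \<subseteq> {w\<in>space M. A w \<in> B}" by auto
    show ?thesis using finite_measure_Diff[OF m sub] seq by simp
  qed
  also have "\<dots> = (\<integral>w. indicator B (A w) \<partial>M) - (\<integral>w. \<tau> (A w) * indicator B (A w) \<partial>M)"
    using U measure_A_in by simp
  also have "\<dots> = (\<integral>w. indicator B (A w) - \<tau> (A w) * indicator B (A w) \<partial>M)"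
  proof (rule Bochner_Integration.integral_diff[symmetric])
    show "integrable M (\<lambda>w. indicator B (A w) :: real)"
      by (rule integrable_bdd[where c=1]) (auto split: split_indicator)
    show "integrable M (\<lambda>w. \<tau> (A w) * indicator B (A w))"
      by (rule integrable_bdd[where c=1]) (use \<tau>r in \<open>auto split: split_indicator simp: abs_le_iff intro: order_trans\<close>)
  qed
  also have "\<dots> = K B u" unfolding K_def \<tau>_def V_def
    by (rule Bochner_Integration.integral_cong) (auto split: split_indicator)
  finally show ?thesis .
qed

end

context cor2_setting
begin

definition "Zq w = cond_quantile C12 (1 - G w) (V w)"

lemma Zq_Inf: "Zq w = Inf {u. 1 - G w < C12 u (V w)}"
  unfolding Zq_def cond_quantile_def rquantile_def by simp

lemma ZE1:
  assumes G: "0 < G w"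
  shows "Zq w < z \<longleftrightarrow> (\<exists>u<z. 1 - C12 u (V w) < G w)"
proof -
  define S where "S = {u. 1 - G w < C12 u (V w)}"
  have "1 \<in> S" unfolding S_def using C12_top[OF V_range, of 1 w] G by simp
  then have ne: "S \<noteq> {}" by auto
  have bdd: "bdd_below S" unfolding bdd_below_def S_def
  proof (intro exI[of _ 0] ballI CollectI)
    fix u assume u: "u \<in> {u. 1 - G w < C12 u (V w)}"
    show "0 \<le> u"
    proof (rule ccontr)
      assume "\<not> 0 \<le> u"
      then have "C12 u (V w) = 0" using C12_neg[OF V_range] by simp
      then show False using u G_range[of w] by simp
    qed
  qed
  have "Zq w < z \<longleftrightarrow> (\<exists>u\<in>S. u < z)" unfolding Zq_Inf S_def[symmetric] by (rule cInf_less_iff[OF ne bdd])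
  then show ?thesis unfolding S_def by auto
qed

lemma ZE1q:
  assumes G: "0 < G w"
  shows "Zq w < z \<longleftrightarrow> (\<exists>q\<in>\<rat>. q < z \<and> 1 - C12 q (V w) < G w)"
proof -
  have "(\<exists>u<z. 1 - C12 u (V w) < G w) \<longleftrightarrow> (\<exists>q\<in>\<rat>. q < z \<and> 1 - C12 q (V w) < G w)"
  proof
    assume "\<exists>u<z. 1 - C12 u (V w) < G w"
    then obtain u where u: "u < z" "1 - C12 u (V w) < G w" by blast
    obtain q where q: "q \<in> \<rat>" "u < q" "q < z" using Rats_dense_in_real[OF u(1)] by blast
    have "C12 u (V w) \<le> C12 q (V w)" using C12_mono[OF V_range] q by simp
    then show "\<exists>q\<in>\<rat>. q < z \<and> 1 - C12 q (V w) < G w" using q u by (intro bexI[of _ q]) auto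
  qed auto
  then show ?thesis using ZE1[OF G] by simp
qed

lemma ZE2:
  assumes G: "0 < G w" and E: "1 - C12 u (V w) < G w"
  shows "Zq w \<le> u"
proof -
  define S where "S = {u. 1 - G w < C12 u (V w)}"
  have bdd: "bdd_below S" unfolding bdd_below_def S_def
  proof (intro exI[of _ 0] ballI CollectI)
    fix u assume u: "u \<in> {u. 1 - G w < C12 u (V w)}"
    show "0 \<le> u"
    proof (rule ccontr)
      assume "\<not> 0 \<le> u"
      then have "C12 u (V w) = 0" using C12_neg[OF V_range] by simp
      then show False using u G_range[of w] by simp
    qed
  qed
  have "u \<in> S" unfolding S_def using E by simp
  then show ?thesis unfolding Zq_Inf S_def[symmetric] by (rule cInf_lower[OF _ bdd])
qed

lemma ZE3:
  assumes G: "0 < G w" and "Zq w < u"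
  shows "1 - C12 u (V w) < G w"
proof -
  obtain u' where "u' < u" "1 - C12 u' (V w) < G w" using ZE1[OF G] assms(2) by blast
  moreover have "C12 u' (V w) \<le> C12 u (V w)" using C12_mono[OF V_range] \<open>u' < u\<close> by simp
  ultimately show ?thesis by simp
qed

lemma ZG0: "G w \<le> 0 \<Longrightarrow> Zq w = Inf ({} :: real set)"
proof -
  assume "G w \<le> 0"
  then have "G w = 0" using G_range[of w] by simp
  then have "{u. 1 - G w < C12 u (V w)} = {}" using C12_range(2)[OF V_range] by (auto simp: not_less)
  then show ?thesis unfolding Zq_Inf by simp
qed

lemma Zq_meas[measurable]: "Zq \<in> borel_measurable M"
proof (rule borel_measurableI_less)
  fix z
  have eq: "{w \<in> space M. Zq w < z} = (\<Union>q\<in>\<rat>. {w\<in>space M. 0 < G w \<and> q < z \<and> 1 - C12 q (V w) < G w}) \<union> {w\<in>space M. G w \<le> 0 \<and> Inf ({} :: real set) < z}"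
  proof (intro set_eqI iffI)
    fix w assume w: "w \<in> {w \<in> space M. Zq w < z}"
    show "w \<in> (\<Union>q\<in>\<rat>. {w\<in>space M. 0 < G w \<and> q < z \<and> 1 - C12 q (V w) < G w}) \<union> {w\<in>space M. G w \<le> 0 \<and> Inf ({} :: real set) < z}"
    proof (cases "0 < G w")
      case True then show ?thesis using ZE1q[OF True, of z] w by auto
    next
      case False then show ?thesis using ZG0[of w] w by auto
    qed
  next
    fix w assume w: "w \<in> (\<Union>q\<in>\<rat>. {w\<in>space M. 0 < G w \<and> q < z \<and> 1 - C12 q (V w) < G w}) \<union> {w\<in>space M. G w \<le> 0 \<and> Inf ({} :: real set) < z}"
    show "w \<in> {w \<in> space M. Zq w < z}"
    proof (cases "0 < G w")
      case True then show ?thesis using ZE1q[OF True, of z] w by auto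
    next
      case False then show ?thesis using ZG0[of w] w by auto
    qed
  qed
  have "\<And>q. {w\<in>space M. 0 < G w \<and> q < z \<and> 1 - C12 q (V w) < G w} \<in> sets M" by measurable
  then have "(\<Union>q\<in>\<rat>. {w\<in>space M. 0 < G w \<and> q < z \<and> 1 - C12 q (V w) < G w}) \<in> sets M"
    by (intro sets.countable_UN' countable_rat) auto
  moreover have "{w\<in>space M. G w \<le> 0 \<and> Inf ({} :: real set) < z} \<in> sets M" by measurable
  ultimately show "{w \<in> space M. Zq w < z} \<in> sets M" unfolding eq by auto
qed

definition "N0 = {w\<in>space M. G w \<le> 0}"

lemma N0_sets[measurable]: "N0 \<in> sets M" unfolding N0_def by measurable

lemma N0_null: "measure M N0 = 0"
proof -
  have "measure M {w\<in>space M. G w \<le> (\<lambda>_. 0) (A w) \<and> A w \<in> UNIV} = (\<integral>w. (\<lambda>_. 0) (A w) * indicator UNIV (A w) \<partial>M)"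
    by (rule U_lemma) auto
  then show ?thesis unfolding N0_def by simp
qed

lemma measure_le_plus_null:
  assumes [measurable]: "S \<in> sets M" "T \<in> sets M" and sub: "S \<subseteq> T \<union> N0"
  shows "measure M S \<le> measure M T"
proof -
  have "measure M S \<le> measure M (T \<union> N0)" by (rule finite_measure_mono[OF sub]) measurable
  also have "\<dots> \<le> measure M T + measure M N0" by (rule measure_subadditive) auto
  finally show ?thesis using N0_null by simp
qed

lemma Z_lt_B:
  assumes [measurable]: "B \<in> sets borel" and z: "0 \<le> z" "z \<le> 1"
  shows "measure M {w\<in>space M. Zq w < z \<and> A w \<in> B} = K B z"
proof (rule antisym)
  show "measure M {w\<in>space M. Zq w < z \<and> A w \<in> B} \<le> K B z"
  proof -
    have "measure M {w\<in>space M. Zq w < z \<and> A w \<in> B} \<le> measure M {w\<in>space M. 1 - C12 z (V w) < G w \<and> A w \<in> B}"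
    proof (rule measure_le_plus_null)
      show "{w\<in>space M. Zq w < z \<and> A w \<in> B} \<subseteq> {w\<in>space M. 1 - C12 z (V w) < G w \<and> A w \<in> B} \<union> N0"
        using ZE3 unfolding N0_def by force
    qed measurable
    then show ?thesis using Eu_B by simp
  qed
  show "K B z \<le> measure M {w\<in>space M. Zq w < z \<and> A w \<in> B}"
  proof (cases "z = 0")
    case True
    have "K B z \<le> K UNIV z" by (rule K_le_UNIV) simp
    also have "\<dots> = 0" using K_UNIV True by simp
    finally show ?thesis using measure_nonneg order_trans by blast
  next
    case False
    show ?thesis
    proof (rule field_le_epsilon)
      fix e :: real assume e: "0 < e"
      define u where "u = z - min e (z/2)"
      have u: "0 \<le> u" "u < z" "z - u \<le> e" using e z False by (auto simp: u_def)
      have "K B z \<le> K B u + (z - u)" by (rule K_lip) (use u z in auto)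
      also have "K B u = measure M {w\<in>space M. 1 - C12 u (V w) < G w \<and> A w \<in> B}" using Eu_B by simp
      also have "\<dots> \<le> measure M {w\<in>space M. Zq w < z \<and> A w \<in> B}"
      proof (rule measure_le_plus_null)
        show "{w\<in>space M. 1 - C12 u (V w) < G w \<and> A w \<in> B} \<subseteq> {w\<in>space M. Zq w < z \<and> A w \<in> B} \<union> N0"
        proof safe
          fix w assume "w \<in> space M" "1 - C12 u (V w) < G w" "A w \<in> B" "w \<notin> N0"
          then have "0 < G w" unfolding N0_def by auto
          then have "Zq w \<le> u" using ZE2 \<open>1 - C12 u (V w) < G w\<close> by blast
          then show "Zq w < z" using u by simp
        qed
      qed measurable
      finally show "K B z \<le> measure M {w\<in>space M. Zq w < z \<and> A w \<in> B} + e" using u by simp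
    qed
  qed
qed

lemma Z_le_B:
  assumes [measurable]: "B \<in> sets borel" and z: "0 \<le> z" "z \<le> 1"
  shows "measure M {w\<in>space M. Zq w \<le> z \<and> A w \<in> B} = K B z"
proof (rule antisym)
  show "K B z \<le> measure M {w\<in>space M. Zq w \<le> z \<and> A w \<in> B}"
    unfolding Z_lt_B[OF assms, symmetric] by (rule finite_measure_mono) auto
  show "measure M {w\<in>space M. Zq w \<le> z \<and> A w \<in> B} \<le> K B z"
  proof (cases "z = 1")
    case True
    have "measure M {w\<in>space M. Zq w \<le> z \<and> A w \<in> B} \<le> measure M {w\<in>space M. A w \<in> B}"
      by (rule finite_measure_mono) auto
    then show ?thesis using K_one True by simp
  next
    case False
    show ?thesis
    proof (rule field_le_epsilon)
      fix e :: real assume e: "0 < e"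
      define m where "m = min e ((1 - z)/2)"
      define u where "u = z + m"
      have zz: "z < 1" using z False by simp
      have m1: "m \<le> (1 - z)/2" unfolding m_def by (rule min.cobounded2)
      have m2: "0 < m" using e zz unfolding m_def by auto
      have m3: "m \<le> e" unfolding m_def by (rule min.cobounded1)
      note m = m1 m2 m3
      have u1: "z < u" using m zz unfolding u_def by linarith
      have u2: "u \<le> 1" using m zz unfolding u_def by (simp add: field_simps)
      have u3: "u - z \<le> e" using m zz unfolding u_def by linarith
      note u = u1 u2 u3
      have "measure M {w\<in>space M. Zq w \<le> z \<and> A w \<in> B} \<le> measure M {w\<in>space M. 1 - C12 u (V w) < G w \<and> A w \<in> B}"
      proof (rule measure_le_plus_null)
        show "{w\<in>space M. Zq w \<le> z \<and> A w \<in> B} \<subseteq> {w\<in>space M. 1 - C12 u (V w) < G w \<and> A w \<in> B} \<union> N0"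
        proof safe
          fix w assume "w \<in> space M" "Zq w \<le> z" "A w \<in> B" "w \<notin> N0"
          then have "0 < G w" unfolding N0_def by auto
          moreover have "Zq w < u" using \<open>Zq w \<le> z\<close> u by simp
          ultimately show "1 - C12 u (V w) < G w" using ZE3 by blast
        qed
      qed measurable
      also have "\<dots> = K B u" using Eu_B by simp
      also have "\<dots> \<le> K B z + (u - z)" by (rule K_lip) (use u z in auto)
      finally show "measure M {w\<in>space M. Zq w \<le> z \<and> A w \<in> B} \<le> K B z + e" using u by simp
    qed
  qed
qed

lemma Z_le: "0 \<le> z \<Longrightarrow> z \<le> 1 \<Longrightarrow> measure M {w\<in>space M. Zq w \<le> z} = z"
  using Z_le_B[of UNIV z] K_UNIV by simp

lemma Z_distr: "distributed M lborel Zq (\<lambda>x. indicator {0..1} x / measure lborel {0..1::real})"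
  by (rule uniform_distrI_borel_atLeastAtMost) (auto simp: Z_le)

lemma Z_int:
  fixes g :: "real \<Rightarrow> real"
  assumes [measurable]: "g \<in> borel_measurable borel"
  shows "(\<integral>w. g (Zq w) \<partial>M) = (\<integral>t. indicator {0..1} t * g t \<partial>lborel)"
  using distributed_integral[OF Z_distr, of g] by simp

lemma Z_lt_Aa: "0 \<le> z \<Longrightarrow> z \<le> 1 \<Longrightarrow> measure M {w\<in>space M. Zq w < z \<and> A w \<le> a} = C z (FA a)"
  using Z_lt_B[of "{..a}" z] K_Aa[of z a] by simp

lemma Z_lt: "0 \<le> z \<Longrightarrow> z \<le> 1 \<Longrightarrow> measure M {w\<in>space M. Zq w < z} = z"
  using Z_lt_B[of UNIV z] K_UNIV by simp

end

context cor2_setting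
begin

lemma Zq_AE_range: "AE w in M. 0 \<le> Zq w \<and> Zq w \<le> 1"
proof -
  have n1: "emeasure M {w\<in>space M. Zq w < 0} = 0" using Z_lt[of 0] by (simp add: emeasure_eq_measure)
  have "measure M {w\<in>space M. Zq w \<le> 1} = 1" using Z_le[of 1] by simp
  then have "measure M (space M - {w\<in>space M. Zq w \<le> 1}) = 0"
    by (subst finite_measure_compl) (auto simp: prob_space)
  moreover have "space M - {w\<in>space M. Zq w \<le> 1} = {w\<in>space M. 1 < Zq w}" by auto
  ultimately have n2: "emeasure M {w\<in>space M. 1 < Zq w} = 0"
    by (simp add: emeasure_eq_measure)
  have "AE w in M. \<not> Zq w < 0" by (subst AE_iff_measurable[OF _ refl]) (use n1 in auto)
  moreover have "AE w in M. \<not> 1 < Zq w" by (subst AE_iff_measurable[OF _ refl]) (use n2 in auto)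
  ultimately show ?thesis by eventually_elim auto
qed

lemma rho_ind_pos:
  assumes [measurable]: "S \<in> sets M" and pos: "0 < measure M S"
  shows "0 < (\<integral>w. \<rho> w * indicator S w \<partial>M)"
proof -
  have int: "integrable M (\<lambda>w. \<rho> w * indicator S w)"
    by (rule integrable_real_mult_indicator[OF _ rho_int]) simp
  have nn: "AE w in M. 0 \<le> \<rho> w * indicator S w"
    using rho_pos by eventually_elim (auto split: split_indicator)
  have ge: "0 \<le> (\<integral>w. \<rho> w * indicator S w \<partial>M)" by (rule integral_nonneg_AE[OF nn])
  have "(\<integral>w. \<rho> w * indicator S w \<partial>M) \<noteq> 0"
  proof
    assume "(\<integral>w. \<rho> w * indicator S w \<partial>M) = 0"
    then have "AE w in M. \<rho> w * indicator S w = 0" using integral_nonneg_eq_0_iff_AE[OF int nn] by simp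
    then have "AE w in M. w \<notin> S" using rho_pos by eventually_elim (auto split: split_indicator)
    then have "emeasure M S = 0"
    proof (subst (asm) AE_iff_measurable[of S])
      show "{w \<in> space M. \<not> w \<notin> S} = S" using sets.sets_into_space[OF assms(1)] by auto
    qed auto
    then show False using pos by (simp add: emeasure_eq_measure)
  qed
  then show ?thesis using ge by simp
qed

end

locale cor2_full = cor2_setting +
  fixes \<alpha> x :: real and \<phi> :: "real \<Rightarrow> real"
  assumes alpha: "0 < \<alpha>" "\<alpha> < 1" and xpos: "0 < x"
    and phi_meas[measurable]: "\<phi> \<in> borel_measurable borel"
    and phi_int: "integrable M (\<lambda>w. \<phi> (Zq w))"
    and phi_condexp: "\<forall>B\<in>sets borel. (\<integral>w. indicator B (Zq w) * \<rho> w \<partial>M) = (\<integral>w. indicator B (Zq w) * \<phi> (Zq w) \<partial>M)"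
begin

definition "Phi c = (LBINT z:{c..1}. \<phi> z)"

lemma Phi_eq:
  assumes c: "0 \<le> c"
  shows "Phi c = (\<integral>w. \<rho> w * indicator {c..} (Zq w) \<partial>M)"
proof -
  have "(\<integral>w. indicator {c..1} (Zq w) * \<phi> (Zq w) \<partial>M) = (\<integral>t. indicator {0..1} t * (indicator {c..1} t * \<phi> t) \<partial>lborel)"
    by (rule Z_int[of "\<lambda>t. indicator {c..1} t * \<phi> t"]) measurable
  also have "\<dots> = Phi c" unfolding Phi_def set_lebesgue_integral_def
    by (rule Bochner_Integration.integral_cong) (use c in \<open>auto split: split_indicator\<close>)
  finally have "Phi c = (\<integral>w. indicator {c..1} (Zq w) * \<phi> (Zq w) \<partial>M)" by simp
  also have "\<dots> = (\<integral>w. indicator {c..1} (Zq w) * \<rho> w \<partial>M)"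
    using phi_condexp by simp
  also have "\<dots> = (\<integral>w. \<rho> w * indicator {c..} (Zq w) \<partial>M)"
    by (rule integral_cong_AE) (use Zq_AE_range in \<open>auto split: split_indicator\<close>)
  finally show ?thesis .
qed

lemma rho_int_ind: "integrable M (\<lambda>w. \<rho> w * indicator S (Zq w))" if [measurable]: "S \<in> sets borel"
proof -
  have "integrable M (\<lambda>w. \<rho> w * indicator {w\<in>space M. Zq w \<in> S} w)"
    by (rule integrable_real_mult_indicator[OF _ rho_int]) measurable
  then show ?thesis by (rule Bochner_Integration.integrable_cong[THEN iffD1, rotated -1]) (auto split: split_indicator)
qed

lemma Phi_diff:
  assumes "0 \<le> c" "c \<le> c'"
  shows "Phi c - Phi c' = (\<integral>w. \<rho> w * indicator {w\<in>space M. c \<le> Zq w \<and> Zq w < c'} w \<partial>M)"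
proof -
  have "Phi c - Phi c' = (\<integral>w. \<rho> w * indicator {c..} (Zq w) - \<rho> w * indicator {c'..} (Zq w) \<partial>M)"
    using Phi_eq[of c] Phi_eq[of c'] assms rho_int_ind[of "{c..}"] rho_int_ind[of "{c'..}"] by simp
  also have "\<dots> = (\<integral>w. \<rho> w * indicator {w\<in>space M. c \<le> Zq w \<and> Zq w < c'} w \<partial>M)"
    by (rule Bochner_Integration.integral_cong) (use assms in \<open>auto split: split_indicator\<close>)
  finally show ?thesis .
qed

lemma Phi_strict:
  assumes "0 \<le> c" "c < c'" "c' \<le> 1"
  shows "Phi c' < Phi c"
proof -
  have "measure M {w\<in>space M. c \<le> Zq w \<and> Zq w < c'} = measure M ({w\<in>space M. Zq w < c'} - {w\<in>space M. Zq w < c})"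
    by (rule arg_cong[where f="measure M"]) auto
  also have "\<dots> = measure M {w\<in>space M. Zq w < c'} - measure M {w\<in>space M. Zq w < c}"
    by (rule finite_measure_Diff) (use assms in auto)
  also have "\<dots> = c' - c" using Z_lt assms by simp
  finally have "0 < measure M {w\<in>space M. c \<le> Zq w \<and> Zq w < c'}" using assms by simp
  from rho_ind_pos[OF _ this] have "0 < Phi c - Phi c'" using Phi_diff[of c c'] assms by simp
  then show ?thesis by simp
qed

lemma Phi_alpha_pos: "0 < Phi \<alpha>"
proof -
  have "measure M {w\<in>space M. \<alpha> \<le> Zq w} = measure M (space M - {w\<in>space M. Zq w < \<alpha>})"
    by (rule arg_cong[where f="measure M"]) auto
  also have "\<dots> = 1 - \<alpha>" using Z_lt[of \<alpha>] alpha by (subst finite_measure_compl) (auto simp: prob_space)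
  finally have "0 < measure M {w\<in>space M. \<alpha> \<le> Zq w}" using alpha by simp
  from rho_ind_pos[OF _ this] have "0 < (\<integral>w. \<rho> w * indicator {w\<in>space M. \<alpha> \<le> Zq w} w \<partial>M)" by simp
  also have "\<dots> = Phi \<alpha>" unfolding Phi_eq[of \<alpha>, OF less_imp_le[OF alpha(1)]]
    by (rule Bochner_Integration.integral_cong) (auto split: split_indicator)
  finally show ?thesis .
qed

lemma delta_eq: "(\<integral>w. \<rho> w \<partial>M) = Phi 0"
  unfolding Phi_eq[of 0, simplified]
  by (rule integral_cong_AE) (use Zq_AE_range in \<open>auto split: split_indicator\<close>)

lemma Phi_mono: "0 \<le> c \<Longrightarrow> c \<le> c' \<Longrightarrow> c' \<le> 1 \<Longrightarrow> Phi c' \<le> Phi c"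
  using Phi_strict[of c c'] by (cases "c = c'") auto

lemma zeta_results:
  fixes \<zeta> :: "real \<Rightarrow> real"
  assumes zeta: "\<zeta> = (\<lambda>c. indicator {..\<alpha>} c / (LBINT z:{c..1}. \<phi> z))"
  shows "(SUP c\<in>{0<..<1}. \<zeta> c) = \<zeta> \<alpha>" "\<zeta> \<alpha> > 1 / (\<integral>w. \<rho> w \<partial>M)"
proof -
  have z: "\<zeta> c = indicator {..\<alpha>} c / Phi c" for c unfolding zeta Phi_def by simp
  have za: "\<zeta> \<alpha> = 1 / Phi \<alpha>" using z by simp
  show "(SUP c\<in>{0<..<1}. \<zeta> c) = \<zeta> \<alpha>"
  proof (rule cSup_eq_maximum)
    show "\<zeta> \<alpha> \<in> \<zeta> ` {0<..<1}" using alpha by auto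
    fix y assume "y \<in> \<zeta> ` {0<..<1}"
    then obtain c where c: "0 < c" "c < 1" "y = \<zeta> c" by auto
    show "y \<le> \<zeta> \<alpha>"
    proof (cases "c \<le> \<alpha>")
      case True
      then have "Phi \<alpha> \<le> Phi c" using Phi_mono[of c \<alpha>] c alpha by simp
      then have "1 / Phi c \<le> 1 / Phi \<alpha>" using Phi_alpha_pos by (intro divide_left_mono) auto
      then show ?thesis using c True z za by simp
    next
      case False
      then show ?thesis using c z za Phi_alpha_pos by simp
    qed
  qed
  have "Phi \<alpha> < Phi 0" using Phi_strict[of 0 \<alpha>] alpha by simp
  then have "1 / Phi 0 < 1 / Phi \<alpha>" using Phi_alpha_pos by (intro divide_strict_left_mono) auto
  then show "\<zeta> \<alpha> > 1 / (\<integral>w. \<rho> w \<partial>M)" using za delta_eq by simp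
qed

end

context cor2_full
begin

definition "kst = x / (\<integral>w. \<rho> w * indicator {\<alpha>..} (Zq w) \<partial>M)"
definition "Xst w = kst * indicator {\<alpha>..} (Zq w)"

lemma kst_Phi: "kst = x / Phi \<alpha>"
  unfolding kst_def using Phi_eq[of \<alpha>] alpha by simp

lemma kst_pos: "0 < kst"
  unfolding kst_Phi using xpos Phi_alpha_pos by simp

lemma Xst_meas[measurable]: "Xst \<in> borel_measurable M"
  unfolding Xst_def by measurable

lemma Xst_nonneg: "0 \<le> Xst w"
  unfolding Xst_def using kst_pos by (simp split: split_indicator)

lemma cdf_Xst: "cdf_rv M Xst y = (if y < 0 then 0 else if y < kst then \<alpha> else 1)"
proof -
  have "cdf_rv M Xst y = measure M {w\<in>space M. Xst w \<le> y}" unfolding cdf_rv_def ..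
  also have "\<dots> = (if y < 0 then 0 else if y < kst then \<alpha> else 1)"
  proof (cases "y < 0")
    case True
    have e1: "{w\<in>space M. Xst w \<le> y} = {}" using True Xst_nonneg by (auto simp: not_le intro: less_le_trans)
    show ?thesis unfolding e1 using True by simp
  next
    case False
    show ?thesis
    proof (cases "y < kst")
      case True
      have e2: "{w\<in>space M. Xst w \<le> y} = {w\<in>space M. Zq w < \<alpha>}"
        using False True unfolding Xst_def by (auto split: split_indicator)
      show ?thesis unfolding e2 using Z_lt[of \<alpha>] alpha True False by simp
    next
      case F2: False
      have e3: "{w\<in>space M. Xst w \<le> y} = space M"
        using False F2 unfolding Xst_def by (auto split: split_indicator)
      show ?thesis unfolding e3 using F2 False by (simp add: prob_space)
    qed
  qed
  finally show ?thesis .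
qed

lemma FA_bd: "0 \<le> FA a" "FA a \<le> 1" using FA_props by auto

lemma joint_Xst: "measure M {w\<in>space M. Xst w \<le> y \<and> A w \<le> a} = C (cdf_rv M Xst y) (cdf_rv M A a)"
proof -
  have FA: "cdf_rv M A a = FA a" unfolding FA_def ..
  show ?thesis
  proof (cases "y < 0")
    case True
    have e4: "{w\<in>space M. Xst w \<le> y \<and> A w \<le> a} = {}" using True Xst_nonneg by (auto simp: not_le intro: less_le_trans)
    show ?thesis unfolding e4 using True cdf_Xst C_bd[OF FA_bd] FA by simp
  next
    case False
    show ?thesis
    proof (cases "y < kst")
      case True
      have e5: "{w\<in>space M. Xst w \<le> y \<and> A w \<le> a} = {w\<in>space M. Zq w < \<alpha> \<and> A w \<le> a}"
        using False True unfolding Xst_def by (auto split: split_indicator)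
      show ?thesis unfolding e5 using Z_lt_Aa[of \<alpha> a] alpha True False cdf_Xst FA by simp
    next
      case F2: False
      have e6: "{w\<in>space M. Xst w \<le> y \<and> A w \<le> a} = {w\<in>space M. A w \<le> a}"
        using False F2 unfolding Xst_def by (auto split: split_indicator)
      have mm: "measure M {w\<in>space M. Xst w \<le> y \<and> A w \<le> a} = FA a" unfolding e6 FA_def cdf_rv_def by simp
      show ?thesis using mm F2 False cdf_Xst C_bd[OF FA_bd] FA by simp
    qed
  qed
qed

lemma cost_Xst: "(\<integral>\<^sup>+ w. ennreal (\<rho> w * Xst w) \<partial>M) = ennreal x"
proof -
  have int: "integrable M (\<lambda>w. \<rho> w * Xst w)"
    unfolding Xst_def using rho_int_ind[of "{\<alpha>..}"] by (simp add: mult.left_commute[of _ kst])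
  have "(\<integral>\<^sup>+ w. ennreal (\<rho> w * Xst w) \<partial>M) = ennreal (\<integral>w. \<rho> w * Xst w \<partial>M)"
    by (rule nn_integral_eq_integral[OF int]) (use rho_pos Xst_nonneg in \<open>auto elim!: eventually_mono\<close>)
  also have "(\<integral>w. \<rho> w * Xst w \<partial>M) = kst * (\<integral>w. \<rho> w * indicator {\<alpha>..} (Zq w) \<partial>M)"
    unfolding Xst_def by (simp add: mult.left_commute[of _ kst])
  also have "\<dots> = x" unfolding kst_def using Phi_eq[of \<alpha>] alpha Phi_alpha_pos by simp
  finally show ?thesis .
qed

lemma feasible_Xst: "feasible M \<rho> A C x Xst"
  unfolding feasible_def using cost_Xst joint_Xst Xst_nonneg by auto

lemma V_Xst: "rquantile (cdf_rv M Xst) \<alpha> = kst"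
proof -
  have "{y. cdf_rv M Xst y > \<alpha>} = {kst..}"
    unfolding cdf_Xst using alpha kst_pos by (auto simp: not_less)
  then show ?thesis unfolding rquantile_def by simp
qed

end

context cor2_full
begin

lemma nn_nuA:
  assumes [measurable]: "h \<in> borel_measurable M" "g \<in> borel_measurable borel"
  shows "(\<integral>\<^sup>+a. g a \<partial>nuA h) = (\<integral>\<^sup>+w. h w * g (A w) \<partial>M)"
proof -
  have "(\<integral>\<^sup>+a. g a \<partial>nuA h) = (\<integral>\<^sup>+w. g (A w) \<partial>density M h)"
    unfolding nuA_def by (rule nn_integral_distr) auto
  also have "\<dots> = (\<integral>\<^sup>+w. h w * g (A w) \<partial>M)" by (rule nn_integral_density) auto
  finally show ?thesis .
qed

lemma ind_prod:
  assumes [measurable]: "{w\<in>space M. P w} \<in> sets M" "B \<in> sets borel"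
  shows "(\<integral>\<^sup>+w. indicator {w\<in>space M. P w} w * indicator B (A w) \<partial>M) = emeasure M {w\<in>space M. P w \<and> A w \<in> B}"
proof -
  have "(\<integral>\<^sup>+w. indicator {w\<in>space M. P w} w * indicator B (A w) \<partial>M) = (\<integral>\<^sup>+w. indicator {w\<in>space M. P w \<and> A w \<in> B} w \<partial>M)"
    by (rule nn_integral_cong) (auto split: split_indicator)
  also have "\<dots> = emeasure M {w\<in>space M. P w \<and> A w \<in> B}"
  proof (rule nn_integral_indicator)
    have "{w\<in>space M. P w \<and> A w \<in> B} = {w\<in>space M. P w} \<inter> (A -` B \<inter> space M)" by auto
    also have "\<dots> \<in> sets M" by measurable
    finally show "{w\<in>space M. P w \<and> A w \<in> B} \<in> sets M" .
  qed
  finally show ?thesis .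
qed

lemma Kenn:
  assumes [measurable]: "B \<in> sets borel"
  shows "(\<integral>\<^sup>+w. ennreal (C12 s (V w)) * indicator B (A w) \<partial>M) = ennreal (K B s)"
proof -
  have "(\<integral>\<^sup>+w. ennreal (C12 s (V w)) * indicator B (A w) \<partial>M) = (\<integral>\<^sup>+w. ennreal (C12 s (V w) * indicator B (A w)) \<partial>M)"
    by (rule nn_integral_cong) (auto split: split_indicator)
  also have "\<dots> = ennreal (K B s)" unfolding K_def
    by (rule nn_eq_int_bdd(1)[where c=1]) (use C12_range V_range in \<open>auto split: split_indicator\<close>)
  finally show ?thesis .
qed

lemma X_joint_B:
  assumes feas: "feasible M \<rho> A C x X" and B[measurable]: "B \<in> sets borel"
  shows "measure M {w\<in>space M. X w \<le> y \<and> A w \<in> B} = K B (cdf_rv M X y)"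
proof -
  have X[measurable]: "X \<in> borel_measurable M" using feas unfolding feasible_def by simp
  have joint: "measure M {w\<in>space M. X w \<le> y \<and> A w \<le> a} = C (cdf_rv M X y) (FA a)" for a
    using feas unfolding feasible_def FA_def by simp
  define s where "s = cdf_rv M X y"
  have s: "0 \<le> s" "s \<le> 1" unfolding s_def using cdf_rv_props[OF X] by auto
  have S[measurable]: "{w\<in>space M. X w \<le> y} \<in> sets M" by measurable
  have eq: "(\<integral>\<^sup>+w. indicator {w\<in>space M. X w \<le> y} w * indicator B' (A w) \<partial>M) = (\<integral>\<^sup>+w. ennreal (C12 s (V w)) * indicator B' (A w) \<partial>M)"
    if [measurable]: "B' \<in> sets borel" for B'
  proof (rule nuA_eq)
    show "(\<integral>\<^sup>+ w. indicator {w\<in>space M. X w \<le> y} w \<partial>M) < \<infinity>"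
      by (simp add: less_top[symmetric])
    have "(\<integral>\<^sup>+ w. ennreal (C12 s (V w)) \<partial>M) = (\<integral>\<^sup>+w. ennreal (C12 s (V w)) * indicator UNIV (A w) \<partial>M)" by simp
    also have "\<dots> = ennreal (K UNIV s)" by (rule Kenn) simp
    finally show "(\<integral>\<^sup>+ w. ennreal (C12 s (V w)) \<partial>M) < \<infinity>" by simp
    fix a
    have "(\<integral>\<^sup>+w. indicator {w\<in>space M. X w \<le> y} w * indicator {..a} (A w) \<partial>M) = emeasure M {w\<in>space M. X w \<le> y \<and> A w \<in> {..a}}"
      by (rule ind_prod) auto
    also have "\<dots> = ennreal (C s (FA a))" using joint[of a] by (simp add: emeasure_eq_measure s_def)
    also have "\<dots> = ennreal (K {..a} s)" using K_Aa[OF s] by simp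
    also have "\<dots> = (\<integral>\<^sup>+w. ennreal (C12 s (V w)) * indicator {..a} (A w) \<partial>M)" by (rule Kenn[symmetric]) simp
    finally show "(\<integral>\<^sup>+w. indicator {w\<in>space M. X w \<le> y} w * indicator {..a} (A w) \<partial>M) = (\<integral>\<^sup>+w. ennreal (C12 s (V w)) * indicator {..a} (A w) \<partial>M)" .
  qed auto
  have "ennreal (measure M {w\<in>space M. X w \<le> y \<and> A w \<in> B}) = emeasure M {w\<in>space M. X w \<le> y \<and> A w \<in> B}"
    by (simp add: emeasure_eq_measure)
  also have "\<dots> = (\<integral>\<^sup>+w. indicator {w\<in>space M. X w \<le> y} w * indicator B (A w) \<partial>M)"
    by (rule ind_prod[symmetric]) auto
  also have "\<dots> = ennreal (K B s)" using eq[OF B] Kenn[OF B] by simp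
  finally show ?thesis unfolding s_def using K_nonneg[OF B] by simp
qed

lemma X_vs_Z:
  assumes feas: "feasible M \<rho> A C x X" and Fy: "cdf_rv M X y \<le> \<alpha>" and B[measurable]: "B \<in> sets borel"
  shows "measure M {w\<in>space M. \<alpha> \<le> Zq w \<and> A w \<in> B} \<le> measure M {w\<in>space M. y < X w \<and> A w \<in> B}"
proof -
  have X[measurable]: "X \<in> borel_measurable M" using feas unfolding feasible_def by simp
  have s: "0 \<le> cdf_rv M X y" using cdf_rv_props[OF X] by auto
  have d1: "measure M {w\<in>space M. y < X w \<and> A w \<in> B} = measure M {w\<in>space M. A w \<in> B} - measure M {w\<in>space M. X w \<le> y \<and> A w \<in> B}"
  proof -
    have "{w\<in>space M. y < X w \<and> A w \<in> B} = {w\<in>space M. A w \<in> B} - {w\<in>space M. X w \<le> y \<and> A w \<in> B}" by auto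
    then show ?thesis by (simp add: finite_measure_Diff[of "{w\<in>space M. A w \<in> B}" "{w\<in>space M. X w \<le> y \<and> A w \<in> B}"] subset_eq)
  qed
  have d2: "measure M {w\<in>space M. \<alpha> \<le> Zq w \<and> A w \<in> B} = measure M {w\<in>space M. A w \<in> B} - measure M {w\<in>space M. Zq w < \<alpha> \<and> A w \<in> B}"
  proof -
    have "{w\<in>space M. \<alpha> \<le> Zq w \<and> A w \<in> B} = {w\<in>space M. A w \<in> B} - {w\<in>space M. Zq w < \<alpha> \<and> A w \<in> B}" by auto
    then show ?thesis by (simp add: finite_measure_Diff[of "{w\<in>space M. A w \<in> B}" "{w\<in>space M. Zq w < \<alpha> \<and> A w \<in> B}"] subset_eq)
  qed
  have "K B (cdf_rv M X y) \<le> K B \<alpha>" by (rule K_mono[OF B Fy])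
  then show ?thesis using d1 d2 X_joint_B[OF feas B, of y] Z_lt_B[OF B, of \<alpha>] alpha by simp
qed

end

context cor2_full
begin

lemma X_vs_Z_int:
  fixes g :: "real \<Rightarrow> real"
  assumes feas: "feasible M \<rho> A C x X" and Fy: "cdf_rv M X y \<le> \<alpha>"
    and g[measurable]: "g \<in> borel_measurable borel" and gb: "\<And>a. 0 \<le> g a" "\<And>a. g a \<le> c"
  shows "(\<integral>w. g (A w) * indicator {w\<in>space M. \<alpha> \<le> Zq w} w \<partial>M) \<le> (\<integral>w. g (A w) * indicator {w\<in>space M. y < X w} w \<partial>M)"
proof -
  have X[measurable]: "X \<in> borel_measurable M" using feas unfolding feasible_def by simp
  have c0: "0 \<le> c" using gb(1)[of 0] gb(2)[of 0] by linarith
  define h1 where "h1 w = (indicator {w\<in>space M. \<alpha> \<le> Zq w} w :: ennreal)" for w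
  define h2 where "h2 w = (indicator {w\<in>space M. y < X w} w :: ennreal)" for w
  have [measurable]: "h1 \<in> borel_measurable M" "h2 \<in> borel_measurable M" unfolding h1_def h2_def by measurable
  have le: "nuA h1 \<le> nuA h2"
  proof -
    have "emeasure (nuA h1) B \<le> emeasure (nuA h2) B" for B
    proof (cases "B \<in> sets borel")
      case True
      note [measurable] = True
      have "emeasure (nuA h1) B = (\<integral>\<^sup>+w. h1 w * indicator B (A w) \<partial>M)" by (rule emeasure_nuA) auto
      also have "\<dots> = emeasure M {w\<in>space M. \<alpha> \<le> Zq w \<and> A w \<in> B}"
        unfolding h1_def by (rule ind_prod) auto
      also have "\<dots> \<le> emeasure M {w\<in>space M. y < X w \<and> A w \<in> B}"
        using X_vs_Z[OF feas Fy True] by (simp add: emeasure_eq_measure)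
      also have "\<dots> = (\<integral>\<^sup>+w. h2 w * indicator B (A w) \<partial>M)"
        unfolding h2_def by (rule ind_prod[symmetric]) auto
      also have "\<dots> = emeasure (nuA h2) B" by (rule emeasure_nuA[symmetric]) auto
      finally show ?thesis .
    next
      case False
      then show ?thesis by (simp add: emeasure_notin_sets)
    qed
    then show ?thesis by (simp add: le_measure_iff le_fun_def nuA_def)
  qed
  have "(\<integral>\<^sup>+a. ennreal (g a) \<partial>nuA h1) \<le> (\<integral>\<^sup>+a. ennreal (g a) \<partial>nuA h2)"
    by (rule nn_integral_mono_measure[OF _ le]) simp
  then have "(\<integral>\<^sup>+w. h1 w * ennreal (g (A w)) \<partial>M) \<le> (\<integral>\<^sup>+w. h2 w * ennreal (g (A w)) \<partial>M)"
    by (simp add: nn_nuA)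
  moreover have "(\<integral>\<^sup>+w. h1 w * ennreal (g (A w)) \<partial>M) = ennreal (\<integral>w. g (A w) * indicator {w\<in>space M. \<alpha> \<le> Zq w} w \<partial>M)"
  proof -
    have "(\<integral>\<^sup>+w. h1 w * ennreal (g (A w)) \<partial>M) = (\<integral>\<^sup>+w. ennreal (g (A w) * indicator {w\<in>space M. \<alpha> \<le> Zq w} w) \<partial>M)"
      by (rule nn_integral_cong) (auto simp: h1_def split: split_indicator)
    also have "\<dots> = ennreal (\<integral>w. g (A w) * indicator {w\<in>space M. \<alpha> \<le> Zq w} w \<partial>M)"
      by (rule nn_eq_int_bdd(1)[where c=c]) (use gb c0 in \<open>auto split: split_indicator\<close>)
    finally show ?thesis .
  qed
  moreover have "(\<integral>\<^sup>+w. h2 w * ennreal (g (A w)) \<partial>M) = ennreal (\<integral>w. g (A w) * indicator {w\<in>space M. y < X w} w \<partial>M)"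
  proof -
    have "(\<integral>\<^sup>+w. h2 w * ennreal (g (A w)) \<partial>M) = (\<integral>\<^sup>+w. ennreal (g (A w) * indicator {w\<in>space M. y < X w} w) \<partial>M)"
      by (rule nn_integral_cong) (auto simp: h2_def split: split_indicator)
    also have "\<dots> = ennreal (\<integral>w. g (A w) * indicator {w\<in>space M. y < X w} w \<partial>M)"
      by (rule nn_eq_int_bdd(1)[where c=c]) (use gb c0 in \<open>auto split: split_indicator\<close>)
    finally show ?thesis .
  qed
  ultimately have le2: "ennreal (\<integral>w. g (A w) * indicator {w\<in>space M. \<alpha> \<le> Zq w} w \<partial>M) \<le> ennreal (\<integral>w. g (A w) * indicator {w\<in>space M. y < X w} w \<partial>M)"
    by simp
  have "0 \<le> (\<integral>w. g (A w) * indicator {w\<in>space M. y < X w} w \<partial>M)"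
    by (rule Bochner_Integration.integral_nonneg) (use gb in \<open>auto split: split_indicator\<close>)
  with le2 show ?thesis by (simp add: ennreal_le_iff)
qed

definition "Pq q a \<longleftrightarrow> (\<forall>u\<in>\<rat>. u < \<alpha> \<longrightarrow> Fcond q a \<le> 1 - C12 u (FA a))"
definition "rn (n::nat) a = Sup (insert 0 {q \<in> \<rat>. 0 \<le> q \<and> q \<le> real n \<and> Pq q a})"

lemma rn_bdd: "bdd_above (insert 0 {q \<in> \<rat>. 0 \<le> q \<and> q \<le> real n \<and> Pq q a})"
  by (rule bdd_aboveI[where M="real n"]) auto

lemma rn_bounds: "0 \<le> rn n a" "rn n a \<le> real n"
proof -
  show "0 \<le> rn n a" unfolding rn_def by (rule cSup_upper[OF _ rn_bdd]) simp
  show "rn n a \<le> real n" unfolding rn_def by (rule cSup_least) auto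
qed

lemma Pq_meas: "{a \<in> space borel. Pq q a} \<in> sets borel"
  unfolding Pq_def
proof (rule sets.sets_Collect_countable_All')
  fix u :: real
  show "{a \<in> space borel. u < \<alpha> \<longrightarrow> Fcond q a \<le> 1 - C12 u (FA a)} \<in> sets borel" by measurable
qed (rule countable_rat)

lemma rn_meas[measurable]: "rn n \<in> borel_measurable borel"
proof (rule borel_measurableI_greater)
  fix c
  have eq: "{a \<in> space borel. c < rn n a} = {a \<in> space borel. c < 0} \<union> (\<Union>q\<in>\<rat>. {a \<in> space borel. 0 \<le> q \<and> q \<le> real n \<and> Pq q a \<and> c < q})"
    unfolding rn_def less_cSup_iff[OF insert_not_empty rn_bdd] by auto
  have H: "\<And>q. {a \<in> space borel. 0 \<le> q \<and> q \<le> real n \<and> Pq q a \<and> c < q} \<in> sets borel"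
  proof -
    fix q :: real
    show "{a \<in> space borel. 0 \<le> q \<and> q \<le> real n \<and> Pq q a \<and> c < q} \<in> sets borel"
    proof (cases "0 \<le> q \<and> q \<le> real n \<and> c < q")
      case True
      then have e: "{a \<in> space borel. 0 \<le> q \<and> q \<le> real n \<and> Pq q a \<and> c < q} = {a \<in> space borel. Pq q a}" by blast
      show ?thesis unfolding e by (rule Pq_meas)
    next
      case False
      then have e: "{a \<in> space borel. 0 \<le> q \<and> q \<le> real n \<and> Pq q a \<and> c < q} = {}" by blast
      show ?thesis unfolding e by (rule sets.empty_sets)
    qed
  qed
  have U: "(\<Union>q\<in>\<rat>. {a \<in> space borel. 0 \<le> q \<and> q \<le> real n \<and> Pq q a \<and> c < q}) \<in> sets borel"
    by (rule sets.countable_UN'[OF countable_rat]) (use H in blast)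
  have Z: "{a \<in> space borel. c < (0::real)} \<in> sets borel"
    by (cases "c < 0") auto
  show "{a \<in> space borel. c < rn n a} \<in> sets borel" unfolding eq by (rule sets.Un[OF Z U])
qed

lemma rn_a:
  assumes w: "0 < G w" "0 < \<rho> w" and Z: "\<alpha> \<le> Zq w"
  shows "min (\<rho> w) (real n) \<le> rn n (A w)"
proof (rule ccontr)
  assume "\<not> ?thesis"
  then have lt: "rn n (A w) < min (\<rho> w) (real n)" by (simp only: not_le)
  obtain q where q: "q \<in> \<rat>" "rn n (A w) < q" "q < min (\<rho> w) (real n)" using Rats_dense_in_real[OF lt] by blast
  have q0: "0 \<le> q" using q rn_bounds(1)[of n "A w"] by simp
  have noE: "\<not> (1 - C12 u (V w) < G w)" if "u < \<alpha>" for u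
    using ZE1[OF w(1), of \<alpha>] Z that by auto
  have "Pq q (A w)" unfolding Pq_def
  proof (intro ballI impI)
    fix u assume "u \<in> \<rat>" "u < \<alpha>"
    have "Fcond q (A w) \<le> Fcond (\<rho> w) (A w)" using q by (intro Fc_monoD) simp
    also have "\<dots> = G w" unfolding G_def ..
    also have "\<dots> \<le> 1 - C12 u (V w)" using noE[OF \<open>u < \<alpha>\<close>] by simp
    finally show "Fcond q (A w) \<le> 1 - C12 u (FA (A w))" unfolding V_def .
  qed
  then have "q \<le> rn n (A w)" unfolding rn_def using q q0 by (intro cSup_upper[OF _ rn_bdd]) auto
  then show False using q by simp
qed

lemma rn_b:
  assumes w: "0 < G w" "0 < \<rho> w" and Z: "Zq w < \<alpha>"
  shows "rn n (A w) \<le> \<rho> w"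
proof -
  obtain u where u: "u \<in> \<rat>" "u < \<alpha>" "1 - C12 u (V w) < G w" using ZE1q[OF w(1)] Z by blast
  show ?thesis unfolding rn_def
  proof (rule cSup_least)
    fix q assume "q \<in> insert 0 {q \<in> \<rat>. 0 \<le> q \<and> q \<le> real n \<and> Pq q (A w)}"
    then show "q \<le> \<rho> w"
    proof
      assume "q = 0" then show ?thesis using w by simp
    next
      assume "q \<in> {q \<in> \<rat>. 0 \<le> q \<and> q \<le> real n \<and> Pq q (A w)}"
      then have "Fcond q (A w) \<le> 1 - C12 u (V w)" using u unfolding Pq_def V_def by auto
      then have "Fcond q (A w) < Fcond (\<rho> w) (A w)" using u unfolding G_def by simp
      then show "q \<le> \<rho> w" using Fc_monoD[of "\<rho> w" q "A w"] by (cases "\<rho> w \<le> q") auto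
    qed
  qed simp
qed

end

context cor2_full
begin

lemma G_pos_AE: "AE w in M. 0 < G w"
proof -
  have "emeasure M N0 = 0" using N0_null by (simp add: emeasure_eq_measure)
  moreover have "{w\<in>space M. \<not> 0 < G w} = N0" unfolding N0_def by auto
  ultimately show ?thesis by (subst AE_iff_measurable[OF N0_sets]) auto
qed

lemma tp_lim: "(\<lambda>n. \<integral>w. max 0 (\<rho> w - real n) \<partial>M) \<longlonglongrightarrow> 0"
proof -
  have "(\<lambda>n. \<integral>w. max 0 (\<rho> w - real n) \<partial>M) \<longlonglongrightarrow> (\<integral>w. 0 \<partial>M)"
  proof (rule integral_dominated_convergence[where w="\<lambda>w. \<bar>\<rho> w\<bar>"])
    show "integrable M (\<lambda>w. \<bar>\<rho> w\<bar>)" using rho_int by auto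
    show "AE x in M. (\<lambda>n. max 0 (\<rho> x - real n)) \<longlonglongrightarrow> 0"
    proof (rule AE_I2)
      fix x
      obtain N where N: "\<rho> x \<le> real N" using real_arch_simple by blast
      have "\<forall>\<^sub>F n in sequentially. max 0 (\<rho> x - real n) = 0"
        unfolding eventually_sequentially using N by (intro exI[of _ N]) auto
      then show "(\<lambda>n. max 0 (\<rho> x - real n)) \<longlonglongrightarrow> 0" by (rule tendsto_eventually)
    qed
    show "AE x in M. norm (max 0 (\<rho> x - real n)) \<le> \<bar>\<rho> x\<bar>" for n
      by (rule AE_I2) auto
  qed auto
  then show ?thesis by simp
qed

lemma NP_main:
  assumes feas: "feasible M \<rho> A C x X" and Fy: "cdf_rv M X y \<le> \<alpha>"
  shows "Phi \<alpha> \<le> (\<integral>w. \<rho> w * indicator {w\<in>space M. y < X w} w \<partial>M)"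
proof -
  have X[measurable]: "X \<in> borel_measurable M" using feas unfolding feasible_def by simp
  define Ws where "Ws w = (indicator {w\<in>space M. \<alpha> \<le> Zq w} w :: real)" for w
  define W where "W w = (indicator {w\<in>space M. y < X w} w :: real)" for w
  define tp where "tp n w = max 0 (\<rho> w - real n)" for n w
  have [measurable]: "Ws \<in> borel_measurable M" "W \<in> borel_measurable M" unfolding Ws_def W_def by measurable
  have iW: "integrable M (\<lambda>w. \<rho> w * W w)" unfolding W_def
    by (rule integrable_real_mult_indicator[OF _ rho_int]) measurable
  have iWs: "integrable M (\<lambda>w. \<rho> w * Ws w)" unfolding Ws_def
    by (rule integrable_real_mult_indicator[OF _ rho_int]) measurable
  have itp: "integrable M (tp n)" for n unfolding tp_def
    by (intro integrable_max Bochner_Integration.integrable_diff rho_int) auto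
  have irW: "integrable M (\<lambda>w. rn n (A w) * W w)" for n
    by (rule integrable_bdd[where c="real n"]) (use rn_bounds in \<open>auto simp: W_def split: split_indicator\<close>)
  have irWs: "integrable M (\<lambda>w. rn n (A w) * Ws w)" for n
    by (rule integrable_bdd[where c="real n"]) (use rn_bounds in \<open>auto simp: Ws_def split: split_indicator\<close>)
  have step: "(\<integral>w. \<rho> w * Ws w \<partial>M) \<le> (\<integral>w. \<rho> w * W w \<partial>M) + (\<integral>w. tp n w \<partial>M)" for n
  proof -
    have pw: "AE w in M. \<rho> w * Ws w + rn n (A w) * W w \<le> \<rho> w * W w + tp n w + rn n (A w) * Ws w"
      using G_pos_AE rho_pos
    proof eventually_elim
      case (elim w)
      have r0: "0 \<le> rn n (A w)" "rn n (A w) \<le> real n" using rn_bounds by auto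
      have t: "0 \<le> tp n w" "\<rho> w - real n \<le> tp n w" unfolding tp_def by auto
      show ?case
      proof (cases "\<alpha> \<le> Zq w")
        case True
        have m: "min (\<rho> w) (real n) \<le> rn n (A w)" by (rule rn_a) (use elim True in auto)
        have "\<rho> w \<le> tp n w + rn n (A w)"
        proof (cases "\<rho> w \<le> real n")
          case True then show ?thesis using m t by (simp add: min_def)
        next
          case False then show ?thesis using m t by (simp add: min_def)
        qed
        then show ?thesis using True t r0 elim unfolding Ws_def W_def by (auto split: split_indicator)
      next
        case False
        have "rn n (A w) \<le> \<rho> w" by (rule rn_b) (use elim False in auto)
        then show ?thesis using False t r0 elim unfolding Ws_def W_def by (auto split: split_indicator)
      qed
    qed
    have "(\<integral>w. \<rho> w * Ws w + rn n (A w) * W w \<partial>M) \<le> (\<integral>w. \<rho> w * W w + tp n w + rn n (A w) * Ws w \<partial>M)"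
      by (rule integral_mono_AE[OF _ _ pw]) (use iW iWs itp irW irWs in auto)
    then have "(\<integral>w. \<rho> w * Ws w \<partial>M) + (\<integral>w. rn n (A w) * W w \<partial>M) \<le> (\<integral>w. \<rho> w * W w \<partial>M) + (\<integral>w. tp n w \<partial>M) + (\<integral>w. rn n (A w) * Ws w \<partial>M)"
      using iW iWs itp irW irWs by simp
    moreover have "(\<integral>w. rn n (A w) * Ws w \<partial>M) \<le> (\<integral>w. rn n (A w) * W w \<partial>M)"
      unfolding Ws_def W_def by (rule X_vs_Z_int[OF feas Fy, where c="real n"]) (use rn_bounds in auto)
    ultimately show ?thesis by linarith
  qed
  have "(\<integral>w. \<rho> w * Ws w \<partial>M) \<le> (\<integral>w. \<rho> w * W w \<partial>M)"
  proof (rule LIMSEQ_le_const)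
    show "(\<lambda>n. (\<integral>w. \<rho> w * W w \<partial>M) + (\<integral>w. tp n w \<partial>M)) \<longlonglongrightarrow> (\<integral>w. \<rho> w * W w \<partial>M)"
      using tendsto_add[OF tendsto_const tp_lim[folded tp_def]] by simp
    show "\<exists>N. \<forall>n\<ge>N. (\<integral>w. \<rho> w * Ws w \<partial>M) \<le> (\<integral>w. \<rho> w * W w \<partial>M) + (\<integral>w. tp n w \<partial>M)"
      using step by blast
  qed
  moreover have "Phi \<alpha> = (\<integral>w. \<rho> w * Ws w \<partial>M)"
    unfolding Phi_eq[OF less_imp_le[OF alpha(1)]] Ws_def
    by (rule Bochner_Integration.integral_cong) (auto split: split_indicator)
  ultimately show ?thesis unfolding W_def by simp
qed

lemma null_measure0:
  assumes "AE w in M. \<not> P w" "{w\<in>space M. P w} \<in> sets M"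
  shows "measure M {w\<in>space M. P w} = 0"
proof -
  have "emeasure M {w\<in>space M. P w} = 0"
    using assms(1) by (subst (asm) AE_iff_measurable[OF assms(2)]) auto
  then show ?thesis by (simp add: measure_def)
qed

lemma opt:
  assumes feas: "feasible M \<rho> A C x X"
  shows "rquantile (cdf_rv M X) \<alpha> \<le> kst"
proof -
  have X[measurable]: "X \<in> borel_measurable M" and Xnn: "AE w in M. 0 \<le> X w"
    and cost: "(\<integral>\<^sup>+ w. ennreal (\<rho> w * X w) \<partial>M) \<le> ennreal x"
    using feas unfolding feasible_def by auto
  define F where "F = cdf_rv M X"
  note P = cdf_rv_props[OF X, folded F_def]
  define S where "S = {y. \<alpha> < F y}"
  have neg: "F y = 0" if "y < 0" for y
  proof -
    have "AE w in M. \<not> X w \<le> y" using Xnn by eventually_elim (use that in auto)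
    then show ?thesis unfolding F_def cdf_rv_def by (rule null_measure0) measurable
  qed
  have "\<forall>\<^sub>F y in at_top. \<alpha> < F y" by (rule order_tendstoD(1)[OF P(5)]) (use alpha in auto)
  then obtain y0 where "\<And>y. y0 \<le> y \<Longrightarrow> \<alpha> < F y" by (auto simp: eventually_at_top_linorder)
  then have ne: "S \<noteq> {}" unfolding S_def by blast
  have bdd: "bdd_below S" unfolding bdd_below_def S_def
  proof (intro exI[of _ 0] ballI)
    fix y assume "y \<in> {y. \<alpha> < F y}"
    then show "0 \<le> y" using neg[of y] alpha by (cases "y < 0") auto
  qed
  show ?thesis
  proof (rule ccontr)
    assume "\<not> ?thesis"
    then have lt: "kst < Inf S" unfolding rquantile_def S_def F_def by simp
    define y where "y = (kst + Inf S) / 2"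
    have y: "kst < y" "y < Inf S" using lt unfolding y_def by auto
    have "y \<notin> S" using y(2) cInf_lower[OF _ bdd, of y] by auto
    then have Fy: "cdf_rv M X y \<le> \<alpha>" unfolding S_def F_def by simp
    have y0: "0 < y" using y kst_pos by simp
    have NP: "Phi \<alpha> \<le> (\<integral>w. \<rho> w * indicator {w\<in>space M. y < X w} w \<partial>M)" by (rule NP_main[OF feas Fy])
    have iW: "integrable M (\<lambda>w. \<rho> w * indicator {w\<in>space M. y < X w} w)"
      by (rule integrable_real_mult_indicator[OF _ rho_int]) measurable
    have "ennreal (y * (\<integral>w. \<rho> w * indicator {w\<in>space M. y < X w} w \<partial>M)) = ennreal (\<integral>w. y * (\<rho> w * indicator {w\<in>space M. y < X w} w) \<partial>M)"
      by simp
    also have "\<dots> = (\<integral>\<^sup>+ w. ennreal (y * (\<rho> w * indicator {w\<in>space M. y < X w} w)) \<partial>M)"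
      by (rule nn_integral_eq_integral[symmetric]) (use iW rho_pos y0 in \<open>auto elim!: eventually_mono split: split_indicator\<close>)
    also have "\<dots> \<le> (\<integral>\<^sup>+ w. ennreal (\<rho> w * X w) \<partial>M)"
    proof (rule nn_integral_mono_AE)
      show "AE w in M. ennreal (y * (\<rho> w * indicator {w\<in>space M. y < X w} w)) \<le> ennreal (\<rho> w * X w)"
        using rho_pos Xnn
      proof eventually_elim
        case (elim w)
        show ?case
        proof (cases "y < X w")
          case True
          then have "y * \<rho> w \<le> X w * \<rho> w" using elim by (intro mult_right_mono) auto
          then show ?thesis using True elim by (auto simp: mult.commute split: split_indicator intro!: ennreal_leI)
        next
          case False
          then show ?thesis using elim by (auto split: split_indicator)
        qed
      qed
    qed
    also have "\<dots> \<le> ennreal x" by (rule cost)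
    finally have "y * (\<integral>w. \<rho> w * indicator {w\<in>space M. y < X w} w \<partial>M) \<le> x"
      using xpos by (simp add: ennreal_le_iff)
    moreover have "y * Phi \<alpha> \<le> y * (\<integral>w. \<rho> w * indicator {w\<in>space M. y < X w} w \<partial>M)"
      using NP y0 by (intro mult_left_mono) auto
    ultimately have "y * Phi \<alpha> \<le> x" by linarith
    then have "y \<le> x / Phi \<alpha>" using Phi_alpha_pos by (simp add: field_simps)
    then show False using y kst_Phi by simp
  qed
qed

end

theorem corollary2:
  fixes M :: "'a measure" and \<rho> A :: "'a \<Rightarrow> real"
    and C C12 Fcond :: "real \<Rightarrow> real \<Rightarrow> real"
    and \<alpha> x \<delta> \<gamma> kstar :: real
    and V :: "('a \<Rightarrow> real) \<Rightarrow> real"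
    and Z Xstar :: "'a \<Rightarrow> real" and \<phi> \<zeta> :: "real \<Rightarrow> real"
  assumes M: "prob_space M"
    and rho_meas: "\<rho> \<in> borel_measurable M"
    and rho_pos: "AE w in M. 0 < \<rho> w"
    and rho_int: "integrable M \<rho>"
    and delta: "\<delta> = (\<integral>w. \<rho> w \<partial>M)"
    and A_meas: "A \<in> borel_measurable M"
    and cop: "copula C"
    and C12: "is_copula_cond_cdf C C12"
    and Fcond: "is_cond_cdf M \<rho> A Fcond"
    and Fcond_cont: "\<forall>a. continuous_on UNIV (\<lambda>r. Fcond r a)"
    and A_cont: "continuous_on UNIV (cdf_rv M A)"
    and alpha: "0 < \<alpha>" "\<alpha> < 1"
    and x: "0 < x"
    and V: "V = (\<lambda>X. rquantile (cdf_rv M X) \<alpha>)"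
    and Z: "Z = (\<lambda>w. cond_quantile C12 (1 - Fcond (\<rho> w) (A w)) (cdf_rv M A (A w)))"
    and phi_meas: "\<phi> \<in> borel_measurable borel"
    and phi_int: "integrable M (\<lambda>w. \<phi> (Z w))"
    and phi_condexp: "\<forall>B\<in>sets borel.
          (\<integral>w. indicator B (Z w) * \<rho> w \<partial>M) = (\<integral>w. indicator B (Z w) * \<phi> (Z w) \<partial>M)"
    and zeta: "\<zeta> = (\<lambda>c. indicator {..\<alpha>} c / (LBINT z:{c..1}. \<phi> z))"
    and gamma: "\<gamma> = (SUP c\<in>{0<..<1}. \<zeta> c)"
    and kstar: "kstar = x / (\<integral>w. \<rho> w * indicator {\<alpha>..} (Z w) \<partial>M)"
    and Xstar: "Xstar = (\<lambda>w. kstar * indicator {\<alpha>..} (Z w))"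
  shows "\<gamma> = \<zeta> \<alpha> \<and> \<zeta> \<alpha> > 1 / \<delta> \<and>
         feasible M \<rho> A C x Xstar \<and>
         (\<forall>X. feasible M \<rho> A C x X \<longrightarrow> V X \<le> V Xstar)"
proof -
  interpret S: cor2_setting M \<rho> A C C12 Fcond
    by (intro cor2_setting.intro cor2_setting_axioms.intro M) (use rho_meas rho_pos rho_int A_meas cop C12 Fcond Fcond_cont A_cont in auto)
  have Zeq: "Z = S.Zq"
    unfolding Z by (rule ext) (simp add: S.Zq_def S.G_def S.V_def S.FA_def)
  interpret F: cor2_full M \<rho> A C C12 Fcond \<alpha> x \<phi>
    by (intro cor2_full.intro cor2_full_axioms.intro S.cor2_setting_axioms)
      (use alpha x phi_meas phi_int phi_condexp Zeq in auto)
  have keq: "kstar = F.kst" unfolding kstar F.kst_def Zeq ..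
  have Xeq: "Xstar = F.Xst" unfolding Xstar F.Xst_def keq Zeq ..
  note zr = F.zeta_results[OF zeta]
  show ?thesis
  proof (intro conjI allI impI)
    show "\<gamma> = \<zeta> \<alpha>" unfolding gamma by (rule zr(1))
    show "\<zeta> \<alpha> > 1 / \<delta>" unfolding delta by (rule zr(2))
    show "feasible M \<rho> A C x Xstar" unfolding Xeq by (rule F.feasible_Xst)
    fix X assume "feasible M \<rho> A C x X"
    then show "V X \<le> V Xstar" unfolding V Xeq F.V_Xst by (rule F.opt)
  qed
qed

end
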